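(* Under the smash product $\diamond$ on $C^\bullet$, the subspace $Z^\bullet$ is a subalgebra and $B^\bullet$ is a two-sided ideal of $Z^\bullet$: if $\alpha,\beta\in Z^\bullet$ then $\alpha\diamond\beta\in Z^\bullet$, and if $\alpha\in Z^\bullet$, $\beta\in B^\bullet$ then $\alpha\diamond\beta\in B^\bullet$ and $\beta\diamond\alpha\in B^\bullet$. In particular $Z^\bullet/B^\bullet$ is an algebra subquotient of $S(V)\otimes\bigwedge^\bullet V^*\otimes\mathbb C[G]$ under $\diamond$.
   Context: Let $G$ be a finite group and $V$ a complex vector space of finite dimension $n$ on which $G$ acts linearly; fix a $G$-invariant Hermitian inner product on $V$. For $g\in G$ let $V^g$ be the fixed space of $g$ and $(V^g)^\perp$ its orthogonal complement. $G$ acts on $V^*$ by $({}^g\phi)(v)=\phi({}^{g^{-1}}v)$ and hence on $S(V)$, $\bigwedge V^*$. For a subspace $W\subseteq V$ regard $W^*$ as the functionals in $V^*$ vanishing on $W^\perp$. Let $C^p=S(V)\otimes\bigwedge^pV^*\otimes\mathbb C[G]=\bigoplus_{g\in G}S(V)\otimes\bigwedge^pV^*\otimes g$. Let $Z^p=\bigoplus_{g\in G}S(V)\otimes\big(\bigwedge^{p-\operatorname{codim}V^g}(V^g)^*\wedge\bigwedge^{\operatorname{codim}V^g}((V^g)^\perp)^*\big)\otimes g\subseteq C^p$ and $B^p=\bigoplus_{g\in G}I((V^g)^\perp)\otimes\big(\bigwedge^{p-\operatorname{codim}V^g}(V^g)^*\wedge\bigwedge^{\operatorname{codim}V^g}((V^g)^\perp)^*\big)\otimes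 g$, where $I((V^g)^\perp)$ is the ideal of $S(V)$ generated by $(V^g)^\perp\subseteq V$ and negative exterior powers are $0$. The smash product on $C^\bullet$ (the skew group algebra $(S(V)\otimes\bigwedge^\bullet V^* )\#G$ for the diagonal action) is $(f\otimes\omega\otimes g)\diamond(f'\otimes\omega'\otimes h)=f\,{}^gf'\otimes(\omega\wedge{}^g\omega')\otimes gh$. *)

theory Defs
  imports "HOL-Analysis.Analysis" "HOL-Algebra.Group"
begin

text \<open>V = complex^'n (n = CARD('n)); a group element g acts on V by the matrix rho g.
  V^* is also modelled as complex^'n via the bilinear pairing below.
  S(V) = polynomial functions on V^* (v in V is the linear function xi |-> xi(v)).
  An element of S(V) (x) wedge V^* is a function F(xi, vs), polynomial in xi, and whose
  restriction to lists vs of length p is the degree-p component (an alternating p-form).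
  An element of C = (S(V) (x) wedge V^*) (x) C[G] is a function alpha : 'g => ..., alpha g
  being the coefficient of g (zero outside the carrier).\<close>

definition pair :: "complex^'n \<Rightarrow> complex^'n \<Rightarrow> complex" where
  "pair xi v = (\<Sum>i\<in>UNIV. xi $ i * v $ i)"

inductive_set fspan :: "('x \<Rightarrow> complex) set \<Rightarrow> ('x \<Rightarrow> complex) set" for S where
  fspan_zero: "(\<lambda>x. 0) \<in> fspan S"
| fspan_step: "f \<in> S \<Longrightarrow> u \<in> fspan S \<Longrightarrow> (\<lambda>x. c * f x + u x) \<in> fspan S"

inductive_set polyfun :: "(complex^'n \<Rightarrow> complex) set" where
  polyfun_const: "(\<lambda>xi. c) \<in> polyfun"
| polyfun_lin: "(\<lambda>xi. pair xi v) \<in> polyfun"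
| polyfun_add: "f \<in> polyfun \<Longrightarrow> g \<in> polyfun \<Longrightarrow> (\<lambda>xi. f xi + g xi) \<in> polyfun"
| polyfun_mult: "f \<in> polyfun \<Longrightarrow> g \<in> polyfun \<Longrightarrow> (\<lambda>xi. f xi * g xi) \<in> polyfun"

inductive_set ideal_gen :: "(complex^'n) set \<Rightarrow> (complex^'n \<Rightarrow> complex) set" for W where
  ideal_gen_zero: "(\<lambda>xi. 0) \<in> ideal_gen W"
| ideal_gen_step: "w \<in> W \<Longrightarrow> f \<in> polyfun \<Longrightarrow> q \<in> ideal_gen W \<Longrightarrow>
      (\<lambda>xi. pair xi w * f xi + q xi) \<in> ideal_gen W"

text \<open>Sign of the shuffle putting the positions in S first (in order) and the rest after.\<close>
definition shuffle_sign :: "nat \<Rightarrow> nat set \<Rightarrow> complex" where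
  "shuffle_sign m S = (-1) ^ card {(i, j). i < j \<and> j < m \<and> j \<in> S \<and> i \<notin> S}"

definition owedge :: "('v list \<Rightarrow> complex) \<Rightarrow> ('v list \<Rightarrow> complex) \<Rightarrow> 'v list \<Rightarrow> complex" where
  "owedge w1 w2 vs = (\<Sum>S\<in>Pow {..<length vs}.
      shuffle_sign (length vs) S * w1 (nths vs S) * w2 (nths vs (- S)))"

definition twedge :: "((complex^'n) \<times> (complex^'n) list \<Rightarrow> complex) \<Rightarrow>
    ((complex^'n) \<times> (complex^'n) list \<Rightarrow> complex) \<Rightarrow> (complex^'n) \<times> (complex^'n) list \<Rightarrow> complex" where
  "twedge F1 F2 = (\<lambda>(xi, vs). owedge (\<lambda>ws. F1 (xi, ws)) (\<lambda>ws. F2 (xi, ws)) vs)"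

definition oneform :: "complex^'n \<Rightarrow> (complex^'n) list \<Rightarrow> complex" where
  "oneform xi vs = (if length vs = 1 then pair xi (hd vs) else 0)"

fun wedge_list :: "(complex^'n) list \<Rightarrow> (complex^'n) list \<Rightarrow> complex" where
  "wedge_list [] = (\<lambda>vs. if vs = [] then 1 else 0)"
| "wedge_list (xi # xis) = owedge (oneform xi) (wedge_list xis)"

definition extpow :: "(complex^'n) set \<Rightarrow> nat \<Rightarrow> ((complex^'n) list \<Rightarrow> complex) set" where
  "extpow L k = fspan {wedge_list xis | xis. set xis \<subseteq> L \<and> length xis = k}"

definition hermitian_inner :: "(complex^'n \<Rightarrow> complex^'n \<Rightarrow> complex) \<Rightarrow> bool" where
  "hermitian_inner h \<longleftrightarrow>
     (\<forall>a b u v w. h (a *s u + b *s v) w = a * h u w + b * h v w) \<and>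
     (\<forall>v w. h v w = cnj (h w v)) \<and>
     (\<forall>v. v \<noteq> 0 \<longrightarrow> Im (h v v) = 0 \<and> Re (h v v) > 0)"

definition fixsp :: "(complex^'n^'n) \<Rightarrow> (complex^'n) set" where
  "fixsp A = {v. A *v v = v}"

definition perp :: "(complex^'n \<Rightarrow> complex^'n \<Rightarrow> complex) \<Rightarrow> (complex^'n) set \<Rightarrow> (complex^'n) set" where
  "perp h W = {u. \<forall>w\<in>W. h w u = 0}"

text \<open>W^* = functionals in V^* vanishing on the orthogonal complement of W.\<close>
definition dualsub :: "(complex^'n \<Rightarrow> complex^'n \<Rightarrow> complex) \<Rightarrow> (complex^'n) set \<Rightarrow> (complex^'n) set" where
  "dualsub h W = {xi. \<forall>u\<in>perp h W. pair xi u = 0}"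

definition codim :: "(complex^'n) set \<Rightarrow> nat" where
  "codim W = CARD('n) - vec.dim W"

definition hcomp :: "nat \<Rightarrow> ((complex^'n) \<times> (complex^'n) list \<Rightarrow> complex) \<Rightarrow>
    (complex^'n) \<times> (complex^'n) list \<Rightarrow> complex" where
  "hcomp p F = (\<lambda>(xi, vs). if length vs = p then F (xi, vs) else 0)"

text \<open>The g-component of Z^p (with ring R = S(V)) resp. of B^p (with R = I((V^g)^perp)).\<close>
definition comp_space :: "(complex^'n \<Rightarrow> complex) set \<Rightarrow> (complex^'n \<Rightarrow> complex^'n \<Rightarrow> complex)
    \<Rightarrow> complex^'n^'n \<Rightarrow> nat \<Rightarrow> ((complex^'n) \<times> (complex^'n) list \<Rightarrow> complex) set" where
  "comp_space R h A p = fspan {(\<lambda>(xi, vs). f xi * owedge om eta vs) | f om eta.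
      codim (fixsp A) \<le> p \<and> f \<in> R \<and>
      om \<in> extpow (dualsub h (fixsp A)) (p - codim (fixsp A)) \<and>
      eta \<in> extpow (dualsub h (perp h (fixsp A))) (codim (fixsp A))}"

definition Zsp where
  "Zsp G rho h = {alpha. (\<forall>g. g \<notin> carrier G \<longrightarrow> alpha g = (\<lambda>_. 0)) \<and>
     (\<forall>g\<in>carrier G. \<forall>p. hcomp p (alpha g) \<in> comp_space polyfun h (rho g) p)}"

definition Bsp where
  "Bsp G rho h = {alpha. (\<forall>g. g \<notin> carrier G \<longrightarrow> alpha g = (\<lambda>_. 0)) \<and>
     (\<forall>g\<in>carrier G. \<forall>p. hcomp p (alpha g) \<in>
        comp_space (ideal_gen (perp h (fixsp (rho g)))) h (rho g) p)}"

definition act where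
  "act G rho g F = (\<lambda>(xi, vs). F (xi v* rho g, map (\<lambda>v. rho (inv\<^bsub>G\<^esub> g) *v v) vs))"

definition smash where
  "smash G rho alpha beta = (\<lambda>k. if k \<in> carrier G then
      (\<lambda>z. \<Sum>g\<in>carrier G. twedge (alpha g) (act G rho g (beta (inv\<^bsub>G\<^esub> g \<otimes>\<^bsub>G\<^esub> k))) z)
    else (\<lambda>_. 0))"

end

theory Submission
  imports Defs
begin


definition Dv :: "'v \<Rightarrow> ('v list \<Rightarrow> complex) \<Rightarrow> 'v list \<Rightarrow> complex" where
  "Dv v w = (\<lambda>us. w (v # us))"
definition Pw :: "('v list \<Rightarrow> complex) \<Rightarrow> 'v list \<Rightarrow> complex" where
  "Pw w = (\<lambda>us. (-1) ^ length us * w us)"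

definition invs :: "nat \<Rightarrow> nat set \<Rightarrow> (nat \<times> nat) set" where
  "invs m S = {(i, j). i < j \<and> j < m \<and> j \<in> S \<and> i \<notin> S}"

lemma shuffle_sign_invs: "shuffle_sign m S = (-1) ^ card (invs m S)"
  unfolding shuffle_sign_def invs_def by simp

lemma finite_invs: "finite (invs m S)"
  by (rule finite_subset[of _ "{..<m} \<times> {..<m}"]) (auto simp: invs_def)

lemma invs_Suc_ins: "invs (Suc m) (insert 0 (Suc ` S)) = map_prod Suc Suc ` invs m S"
  apply (rule Set.set_eqI)
  apply (case_tac x)
  apply (rename_tac i j)
  apply (case_tac i; case_tac j)
     apply (auto simp: invs_def image_iff)
  done

lemma invs_Suc_noins: "S \<subseteq> {..<m} \<Longrightarrow>
  invs (Suc m) (Suc ` S) = Pair 0 ` (Suc ` S) \<union> map_prod Suc Suc ` invs m S"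
  apply (rule Set.set_eqI)
  apply (case_tac x)
  apply (rename_tac i j)
  apply (case_tac i; case_tac j)
     apply (auto simp: invs_def image_iff)
  done

lemma card_invs_ins: "card (invs (Suc m) (insert 0 (Suc ` S))) = card (invs m S)"
proof -
  have "inj_on (map_prod Suc Suc) (invs m S)" by (auto simp: inj_on_def)
  then show ?thesis by (simp add: invs_Suc_ins card_image)
qed

lemma card_invs_noins: assumes "S \<subseteq> {..<m}"
  shows "card (invs (Suc m) (Suc ` S)) = card S + card (invs m S)"
proof -
  have fS: "finite S" using assms finite_subset by blast
  have "card (Pair (0::nat) ` (Suc ` S) \<union> map_prod Suc Suc ` invs m S)
      = card (Pair (0::nat) ` (Suc ` S)) + card (map_prod Suc Suc ` invs m S)"
    by (subst card_Un_disjoint) (auto simp: fS finite_invs)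
  also have "\<dots> = card S + card (invs m S)"
  proof -
    have "inj_on (map_prod Suc Suc) (invs m S)" by (auto simp: inj_on_def)
    then have 1: "card (map_prod Suc Suc ` invs m S) = card (invs m S)" by (simp add: card_image)
    have "inj_on (\<lambda>j. (0::nat, Suc j)) S" by (auto simp: inj_on_def)
    then have "card ((\<lambda>j. (0::nat, Suc j)) ` S) = card S" by (simp add: card_image)
    moreover have "Pair 0 ` (Suc ` S) = (\<lambda>j. (0::nat, Suc j)) ` S" by auto
    ultimately show ?thesis using 1 by simp
  qed
  finally show ?thesis using invs_Suc_noins[OF assms] by simp
qed

lemma Pow_lessThan_Suc:
  "Pow {..<Suc m} = (\<lambda>S. insert 0 (Suc ` S)) ` Pow {..<m} \<union> (\<lambda>S. Suc ` S) ` Pow {..<m}"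
proof (intro Set.set_eqI iffI)
  fix T assume T: "T \<in> Pow {..<Suc m}"
  let ?S = "{j. Suc j \<in> T}"
  have S: "?S \<in> Pow {..<m}" using T by auto
  have "T = (if 0 \<in> T then insert 0 (Suc ` ?S) else Suc ` ?S)"
    by (auto simp: image_iff) (metis not0_implies_Suc)+
  then show "T \<in> (\<lambda>S. insert 0 (Suc ` S)) ` Pow {..<m} \<union> (\<lambda>S. Suc ` S) ` Pow {..<m}"
    using S by (metis (no_types, lifting) UnI1 UnI2 image_eqI)
qed auto

lemma nths_Cons_Suc: "nths (v # vs) (Suc ` S) = nths vs S"
  by (simp add: nths_Cons image_iff)
lemma nths_Cons_ins: "nths (v # vs) (insert 0 (Suc ` S)) = v # nths vs S"
  by (simp add: nths_Cons image_iff)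
lemma nths_Cons_compl_Suc: "nths (v # vs) (- (Suc ` S)) = v # nths vs (- S)"
proof -
  have "{j. Suc j \<in> - Suc ` S} = - S" by auto
  then show ?thesis by (simp add: nths_Cons image_iff)
qed
lemma nths_Cons_compl_ins: "nths (v # vs) (- insert 0 (Suc ` S)) = nths vs (- S)"
proof -
  have "{j. Suc j \<in> - insert 0 (Suc ` S)} = - S" by auto
  then show ?thesis by (simp add: nths_Cons image_iff)
qed

lemma length_nths_sub: "S \<subseteq> {..<length vs} \<Longrightarrow> length (nths vs S) = card S"
proof -
  assume "S \<subseteq> {..<length vs}"
  then have "{i. i < length vs \<and> i \<in> S} = S" by auto
  then show ?thesis by (simp add: length_nths)
qed

lemma owedge_Nil: "owedge w1 w2 [] = w1 [] * w2 []"
  by (simp add: owedge_def shuffle_sign_def)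

lemma owedge_Cons: "owedge w1 w2 (v # vs) = owedge (Dv v w1) w2 vs + owedge (Pw w1) (Dv v w2) vs"
proof -
  let ?m = "length vs"
  let ?F = "\<lambda>S. shuffle_sign (Suc ?m) S * w1 (nths (v # vs) S) * w2 (nths (v # vs) (- S))"
  have inj1: "inj_on (\<lambda>S. insert 0 (Suc ` S)) (Pow {..<?m})"
    by (rule inj_onI) (metis Zero_not_Suc image_iff inj_image_eq_iff inj_Suc insert_iff insert_ident)
  have inj2: "inj_on (\<lambda>S. Suc ` S) (Pow {..<?m})"
    by (meson inj_Suc inj_image_eq_iff inj_onI)
  have disj: "(\<lambda>S. insert 0 (Suc ` S)) ` Pow {..<?m} \<inter> (\<lambda>S. Suc ` S) ` Pow {..<?m} = {}"
    by auto
  have "owedge w1 w2 (v # vs) = sum ?F (Pow {..<Suc ?m})"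
    by (simp add: owedge_def)
  also have "\<dots> = sum ?F ((\<lambda>S. insert 0 (Suc ` S)) ` Pow {..<?m}) + sum ?F ((\<lambda>S. Suc ` S) ` Pow {..<?m})"
    unfolding Pow_lessThan_Suc by (rule sum.union_disjoint) (use disj in auto)
  also have "sum ?F ((\<lambda>S. insert 0 (Suc ` S)) ` Pow {..<?m}) = owedge (Dv v w1) w2 vs"
    unfolding sum.reindex[OF inj1] owedge_def
    by (rule sum.cong) (auto simp: shuffle_sign_invs card_invs_ins nths_Cons_ins nths_Cons_compl_ins Dv_def)
  also have "sum ?F ((\<lambda>S. Suc ` S) ` Pow {..<?m}) = owedge (Pw w1) (Dv v w2) vs"
    unfolding sum.reindex[OF inj2] owedge_def
  proof (rule sum.cong)
    fix S assume "S \<in> Pow {..<?m}"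
    then have S: "S \<subseteq> {..<?m}" by auto
    show "(?F \<circ> (\<lambda>S. Suc ` S)) S = shuffle_sign (length vs) S * Pw w1 (nths vs S) * Dv v w2 (nths vs (- S))"
      using S by (simp add: shuffle_sign_invs card_invs_noins nths_Cons_Suc nths_Cons_compl_Suc
            Dv_def Pw_def length_nths_sub power_add)
  qed simp
  finally show ?thesis .
qed

lemma owedge_addL: "owedge (\<lambda>x. a x + b x) c vs = owedge a c vs + owedge b c vs"
  by (simp add: owedge_def algebra_simps sum.distrib)
lemma owedge_addR: "owedge a (\<lambda>x. b x + c x) vs = owedge a b vs + owedge a c vs"
  by (simp add: owedge_def algebra_simps sum.distrib)
lemma owedge_scaleL: "owedge (\<lambda>x. k * a x) c vs = k * owedge a c vs"
  by (simp add: owedge_def algebra_simps sum_distrib_left)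
lemma owedge_scaleR: "owedge a (\<lambda>x. k * c x) vs = k * owedge a c vs"
  by (simp add: owedge_def algebra_simps sum_distrib_left)
lemma owedge_negL: "owedge (\<lambda>x. - a x) c vs = - owedge a c vs"
  by (simp add: owedge_def algebra_simps sum_negf)
lemma owedge_negR: "owedge a (\<lambda>x. - c x) vs = - owedge a c vs"
  by (simp add: owedge_def algebra_simps sum_negf)
lemma owedge_zeroL: "owedge (\<lambda>x. 0) c vs = 0"
  by (simp add: owedge_def)
lemma owedge_zeroR: "owedge a (\<lambda>x. 0) vs = 0"
  by (simp add: owedge_def)

lemma Pw_Pw: "Pw (Pw a) = a"
  by (rule ext) (simp add: Pw_def power_mult_distrib[symmetric])
lemma Dv_Pw: "Dv v (Pw a) = (\<lambda>us. (-1) * Pw (Dv v a) us)"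
  by (rule ext) (simp add: Pw_def Dv_def)
lemma Dv_owedge: "Dv v (owedge a b) = (\<lambda>us. owedge (Dv v a) b us + owedge (Pw a) (Dv v b) us)"
  by (rule ext) (simp add: Dv_def owedge_Cons)

lemma Pw_owedge_pt: "Pw (owedge a b) vs = owedge (Pw a) (Pw b) vs"
proof (induction vs arbitrary: a b)
  case Nil
  then show ?case by (simp add: Pw_def owedge_Nil)
next
  case (Cons v vs)
  have "Pw (owedge a b) (v # vs) = - (Pw (owedge (Dv v a) b) vs + Pw (owedge (Pw a) (Dv v b)) vs)"
    by (simp add: Pw_def owedge_Cons algebra_simps)
  also have "\<dots> = - (owedge (Pw (Dv v a)) (Pw b) vs + owedge (Pw (Pw a)) (Pw (Dv v b)) vs)"
    using Cons by simp
  also have "\<dots> = owedge (Pw a) (Pw b) (v # vs)"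
    by (simp add: owedge_Cons Dv_Pw owedge_scaleL owedge_scaleR Pw_Pw owedge_negL owedge_negR)
  finally show ?case .
qed

lemma Pw_owedge: "Pw (owedge a b) = owedge (Pw a) (Pw b)"
  by (rule ext) (rule Pw_owedge_pt)

lemma owedge_assoc_pt: "owedge (owedge a b) c vs = owedge a (owedge b c) vs"
proof (induction vs arbitrary: a b c)
  case Nil
  then show ?case by (simp add: owedge_Nil)
next
  case (Cons v vs)
  have "owedge (owedge a b) c (v # vs) = owedge (owedge (Dv v a) b) c vs + owedge (owedge (Pw a) (Dv v b)) c vs
     + owedge (owedge (Pw a) (Pw b)) (Dv v c) vs"
    by (simp add: owedge_Cons Dv_owedge owedge_addL Pw_owedge)
  also have "\<dots> = owedge (Dv v a) (owedge b c) vs + owedge (Pw a) (owedge (Dv v b) c) vs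
     + owedge (Pw a) (owedge (Pw b) (Dv v c)) vs"
    using Cons by simp
  also have "\<dots> = owedge a (owedge b c) (v # vs)"
    by (simp add: owedge_Cons Dv_owedge owedge_addR)
  finally show ?case .
qed

lemma owedge_assoc: "owedge (owedge a b) c = owedge a (owedge b c)"
  by (rule ext) (rule owedge_assoc_pt)

definition eunit :: "'v list \<Rightarrow> complex" where "eunit = (\<lambda>vs. if vs = [] then 1 else 0)"

lemma Dv_eunit: "Dv v eunit = (\<lambda>us. 0)"
  by (rule ext) (simp add: Dv_def eunit_def)
lemma Pw_eunit: "Pw eunit = eunit"
  by (rule ext) (simp add: Pw_def eunit_def)

lemma owedge_unitL_pt: "owedge eunit w vs = w vs"
proof (induction vs arbitrary: w)
  case Nil then show ?case by (simp add: owedge_Nil eunit_def)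
next
  case (Cons v vs) then show ?case
    by (simp add: owedge_Cons Dv_eunit Pw_eunit owedge_zeroL) (simp add: Dv_def)
qed

lemma owedge_unitR_pt: "owedge w eunit vs = w vs"
proof (induction vs arbitrary: w)
  case Nil then show ?case by (simp add: owedge_Nil eunit_def)
next
  case (Cons v vs) then show ?case
    by (simp add: owedge_Cons Dv_eunit Pw_eunit owedge_zeroR) (simp add: Dv_def)
qed

lemma owedge_unitL: "owedge eunit w = w" by (rule ext) (rule owedge_unitL_pt)
lemma owedge_unitR: "owedge w eunit = w" by (rule ext) (rule owedge_unitR_pt)
lemma owedge_unitL': "owedge (\<lambda>vs. if vs = [] then 1 else 0) w = w"
  using owedge_unitL unfolding eunit_def .
lemma owedge_unitR': "owedge w (\<lambda>vs. if vs = [] then 1 else 0) = w"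
  using owedge_unitR unfolding eunit_def .

lemma wedge_list_Nil': "wedge_list [] = eunit"
  by (simp add: eunit_def)

lemma wl_append: "owedge (wedge_list xs) (wedge_list ys) = wedge_list (xs @ ys)"
  by (induction xs) (simp_all add: owedge_unitL' owedge_assoc)

lemma Dv_oneform: "Dv v (oneform x) = (\<lambda>us. pair x v * eunit us)"
  by (rule ext) (simp add: Dv_def oneform_def eunit_def)
lemma Pw_oneform: "Pw (oneform x) = (\<lambda>us. (-1) * oneform x us)"
  by (rule ext) (simp add: Pw_def oneform_def)

lemma oneform_swap_pt: "owedge (oneform x) (oneform y) vs = - owedge (oneform y) (oneform x) vs"
proof (cases vs)
  case Nil then show ?thesis by (simp add: owedge_Nil oneform_def)
next
  case (Cons v us)
  then show ?thesis
    apply (simp only: owedge_Cons Dv_oneform Pw_oneform owedge_scaleL owedge_scaleR owedge_unitL_pt owedge_unitR_pt)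
    apply (simp add: algebra_simps)
    done
qed

lemma oneform_swap: "owedge (oneform x) (oneform y) = (\<lambda>vs. (-1) * owedge (oneform y) (oneform x) vs)"
  by (rule ext) (subst oneform_swap_pt, simp)

lemma oneform_self: "owedge (oneform x) (oneform x) = (\<lambda>vs. 0)"
proof (rule ext)
  fix vs
  have "owedge (oneform x) (oneform x) vs = - owedge (oneform x) (oneform x) vs"
    by (rule oneform_swap_pt)
  then show "owedge (oneform x) (oneform x) vs = 0" by simp
qed

lemma owedge_scaleL_fun: "owedge (\<lambda>x. k * a x) c = (\<lambda>vs. k * owedge a c vs)"
  by (rule ext) (rule owedge_scaleL)
lemma owedge_scaleR_fun: "owedge a (\<lambda>x. k * c x) = (\<lambda>vs. k * owedge a c vs)"
  by (rule ext) (rule owedge_scaleR)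
lemma owedge_negL_fun: "owedge (\<lambda>x. - a x) c = (\<lambda>vs. - owedge a c vs)"
  by (rule ext) (rule owedge_negL)
lemma owedge_negR_fun: "owedge a (\<lambda>x. - c x) = (\<lambda>vs. - owedge a c vs)"
  by (rule ext) (rule owedge_negR)
lemma owedge_zeroL_fun: "owedge (\<lambda>x. 0) c = (\<lambda>vs. 0)"
  by (rule ext) (rule owedge_zeroL)
lemma owedge_zeroR_fun: "owedge a (\<lambda>x. 0) = (\<lambda>vs. 0)"
  by (rule ext) (rule owedge_zeroR)

lemma oneform_comm_wl:
  "owedge (oneform x) (wedge_list ys) = (\<lambda>vs. (-1) ^ length ys * owedge (wedge_list ys) (oneform x) vs)"
proof (induction ys)
  case Nil then show ?case by (simp add: owedge_unitL' owedge_unitR')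
next
  case (Cons y ys)
  have "owedge (oneform x) (wedge_list (y # ys)) = owedge (owedge (oneform x) (oneform y)) (wedge_list ys)"
    by (simp add: owedge_assoc)
  also have "\<dots> = (\<lambda>vs. (-1) * owedge (oneform y) (owedge (oneform x) (wedge_list ys)) vs)"
    by (subst oneform_swap) (simp add: owedge_scaleL_fun owedge_negL_fun owedge_assoc)
  also have "\<dots> = (\<lambda>vs. (-1) ^ length (y # ys) * owedge (wedge_list (y # ys)) (oneform x) vs)"
    by (simp add: Cons owedge_scaleR_fun owedge_assoc)
  finally show ?case .
qed

lemma wl_comm:
  "owedge (wedge_list xs) (wedge_list ys) = (\<lambda>vs. (-1) ^ (length xs * length ys) * owedge (wedge_list ys) (wedge_list xs) vs)"
proof (induction xs)
  case Nil then show ?case by (simp add: owedge_unitL' owedge_unitR')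
next
  case (Cons x xs)
  have "owedge (wedge_list (x # xs)) (wedge_list ys) = owedge (oneform x) (owedge (wedge_list xs) (wedge_list ys))"
    by (simp add: owedge_assoc)
  also have "\<dots> = (\<lambda>vs. (-1) ^ (length xs * length ys) * owedge (owedge (oneform x) (wedge_list ys)) (wedge_list xs) vs)"
    by (simp add: Cons owedge_scaleR_fun owedge_assoc)
  also have "\<dots> = (\<lambda>vs. (-1) ^ (length xs * length ys) * (-1) ^ length ys * owedge (wedge_list ys) (wedge_list (x # xs)) vs)"
  proof -
    have "owedge (owedge (oneform x) (wedge_list ys)) (wedge_list xs)
       = (\<lambda>vs. (-1) ^ length ys * owedge (owedge (wedge_list ys) (oneform x)) (wedge_list xs) vs)"
      by (subst oneform_comm_wl) (rule owedge_scaleL_fun)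
    then show ?thesis by (simp add: owedge_assoc mult.assoc)
  qed
  also have "\<dots> = (\<lambda>vs. (-1) ^ (length (x # xs) * length ys) * owedge (wedge_list ys) (wedge_list (x # xs)) vs)"
    by (simp add: power_add mult_ac)
  finally show ?case .
qed


lemma owedge_addL_fun: "owedge (\<lambda>x. a x + b x) c = (\<lambda>vs. owedge a c vs + owedge b c vs)"
  by (rule ext) (rule owedge_addL)
lemma owedge_addR_fun: "owedge a (\<lambda>x. b x + c x) = (\<lambda>vs. owedge a b vs + owedge a c vs)"
  by (rule ext) (rule owedge_addR)

lemma pair_lin: "pair (a *s x + b *s y) v = a * pair x v + b * pair y v"
  by (simp add: pair_def algebra_simps sum.distrib sum_distrib_left)
lemma pair_zero: "pair 0 v = 0"
  by (simp add: pair_def)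

lemma oneform_lin: "oneform (a *s x + b *s y) = (\<lambda>vs. a * oneform x vs + b * oneform y vs)"
  by (rule ext) (simp add: oneform_def pair_lin)
lemma oneform_zero: "oneform 0 = (\<lambda>vs. 0)"
  by (rule ext) (simp add: oneform_def pair_zero)

lemma wl_lin_head: "wedge_list ((a *s x + b *s y) # l) = (\<lambda>vs. a * wedge_list (x # l) vs + b * wedge_list (y # l) vs)"
  by (simp add: oneform_lin owedge_addL_fun owedge_scaleL_fun)

lemma wl_zero_head: "wedge_list (0 # l) = (\<lambda>vs. 0)"
  by (simp add: oneform_zero owedge_zeroL_fun)

lemma wl_single: "wedge_list [x] = oneform x"
  by (simp add: owedge_unitR')

lemma wl_dup: assumes "x \<in> set l" shows "wedge_list (x # l) = (\<lambda>vs. 0)"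
proof -
  obtain p q where l: "l = p @ x # q" using assms split_list by metis
  let ?c = "(-1::complex) ^ length p"
  have cc: "?c * ?c = 1" by (simp add: power_mult_distrib[symmetric])
  have 1: "owedge (oneform x) (wedge_list p) = (\<lambda>vs. ?c * owedge (wedge_list p) (oneform x) vs)"
    by (rule oneform_comm_wl)
  have 2: "owedge (wedge_list p) (oneform x) = (\<lambda>vs. ?c * owedge (oneform x) (wedge_list p) vs)"
    by (simp add: 1 cc mult.assoc[symmetric])
  have "wedge_list (x # l) = owedge (oneform x) (owedge (wedge_list p) (owedge (oneform x) (wedge_list q)))"
    by (simp add: l wl_append[symmetric])
  also have "\<dots> = owedge (oneform x) (owedge (owedge (wedge_list p) (oneform x)) (wedge_list q))"
    by (simp add: owedge_assoc)
  also have "\<dots> = (\<lambda>vs. ?c * owedge (owedge (owedge (oneform x) (oneform x)) (wedge_list p)) (wedge_list q) vs)"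
    by (simp only: 2 owedge_scaleL_fun owedge_scaleR_fun owedge_assoc)
  also have "\<dots> = (\<lambda>vs. 0)"
    by (simp add: oneform_self owedge_zeroL_fun)
  finally show ?thesis .
qed

lemma wl_span_zero: assumes "y \<in> vec.span (set l)" shows "wedge_list (y # l) = (\<lambda>vs. 0)"
  using assms
proof (induction rule: vec.span_induct_alt)
  case base
  then show ?case by (rule wl_zero_head)
next
  case (step c x y)
  have "c *s x + y = c *s x + 1 *s y" by simp
  then show ?case using step by (simp only: wl_lin_head wl_dup) simp
qed

lemma wl_proj:
  assumes "\<forall>x\<in>set L. x - \<pi> x \<in> vec.span (set T)"
  shows "wedge_list (L @ T) = wedge_list (map \<pi> L @ T)"
  using assms
proof (induction L)
  case Nil then show ?case by simp
next
  case (Cons x L)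
  have IH: "wedge_list (L @ T) = wedge_list (map \<pi> L @ T)" using Cons by simp
  have sp: "x - \<pi> x \<in> vec.span (set (map \<pi> L @ T))"
    using Cons.prems vec.span_mono[of "set T" "set (map \<pi> L @ T)"] by auto
  have "x = 1 *s \<pi> x + 1 *s (x - \<pi> x)" by simp
  then have "wedge_list (x # map \<pi> L @ T) = (\<lambda>vs. 1 * wedge_list (\<pi> x # map \<pi> L @ T) vs + 1 * wedge_list ((x - \<pi> x) # map \<pi> L @ T) vs)"
    by (metis wl_lin_head)
  also have "\<dots> = wedge_list (\<pi> x # map \<pi> L @ T)"
    using wl_span_zero[OF sp] by simp
  finally show ?case using IH by simp
qed

lemma owedge_map: "owedge a b (map f vs) = owedge (\<lambda>us. a (map f us)) (\<lambda>us. b (map f us)) vs"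
  by (simp add: owedge_def nths_map)

lemma pair_mv: "pair x (M *v v) = pair (x v* M) v"
  by (simp add: pair_def matrix_vector_mult_def vector_matrix_mult_def sum_distrib_left sum_distrib_right mult_ac)
     (rule sum.swap)

lemma oneform_map: "oneform x (map (\<lambda>v. M *v v) vs) = oneform (x v* M) vs"
  by (cases vs) (auto simp: oneform_def pair_mv)

lemma wl_map: "wedge_list xs (map (\<lambda>v. M *v v) vs) = wedge_list (map (\<lambda>x. x v* M) xs) vs"
proof (induction xs arbitrary: vs)
  case Nil then show ?case by simp
next
  case (Cons x xs)
  show ?case
    by (simp add: owedge_map oneform_map Cons del: wedge_list.simps(1))
qed



lemma span_Int_indep:
  fixes B D :: "('a::field^'n) set"
  assumes ind: "vec.independent (B \<union> D)" and disj: "B \<inter> D = {}"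
  shows "vec.span B \<inter> vec.span D = {0}"
proof -
  have fin: "finite (B \<union> D)" using ind vec.finiteI_independent by blast
  have iB: "vec.independent B" using ind vec.independent_mono by blast
  have iD: "vec.independent D" using ind vec.independent_mono by blast
  have s: "vec.subspace (vec.span B)" "vec.subspace (vec.span D)" by (rule vec.subspace_span)+
  have 1: "vec.dim {x + y |x y. x \<in> vec.span B \<and> y \<in> vec.span D} + vec.dim (vec.span B \<inter> vec.span D)
        = vec.dim (vec.span B) + vec.dim (vec.span D)"
    by (rule vec.dim_sums_Int[OF s])
  have 2: "{x + y |x y. x \<in> vec.span B \<and> y \<in> vec.span D} = vec.span (B \<union> D)"
    by (rule vec.span_Un[symmetric])
  have 3: "vec.dim (vec.span (B \<union> D)) = card (B \<union> D)"
    using vec.dim_span_eq_card_independent[OF ind] .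
  have 4: "vec.dim (vec.span B) = card B" using vec.dim_span_eq_card_independent[OF iB] .
  have 5: "vec.dim (vec.span D) = card D" using vec.dim_span_eq_card_independent[OF iD] .
  have 6: "card (B \<union> D) = card B + card D"
    using fin disj by (simp add: card_Un_disjoint)
  have "vec.dim (vec.span B \<inter> vec.span D) = 0" using 1 unfolding 2 3 4 5 6 by linarith
  then have "vec.span B \<inter> vec.span D \<subseteq> {0}" by (rule vec.dim_eq_0[THEN iffD1])
  then show ?thesis using vec.span_zero[of B] vec.span_zero[of D] by auto
qed

lemma rank_nullity:
  fixes f :: "'a::field^'n \<Rightarrow> 'a^'m"
  assumes lf: "Vector_Spaces.linear (*s) (*s) f"
  shows "vec.dim {x. f x = 0} + vec.dim (range f) = CARD('n)"
proof -
  let ?K = "{x. f x = 0}"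
  obtain B where B: "B \<subseteq> ?K" "vec.independent B" "?K \<subseteq> vec.span B" "card B = vec.dim ?K"
    using vec.basis_exists[of ?K] by metis
  obtain C where C: "B \<subseteq> C" "vec.independent C" "UNIV \<subseteq> vec.span C"
    using vec.maximal_independent_subset_extend[of B UNIV] B(2) by (metis subset_UNIV)
  have cardC: "card C = CARD('n)"
    using vec.basis_card_eq_dim[of C UNIV] C vec_dim_card by auto
  let ?D = "C - B"
  have finC: "finite C" using C(2) by (rule vec.finiteI_independent)
  have indD: "vec.independent ?D" using C(2) by (rule vec.independent_mono) blast
  have BD: "B \<union> ?D = C" using C(1) by blast
  have Int0: "vec.span B \<inter> vec.span ?D = {0}"
    by (rule span_Int_indep) (simp_all only: BD C(2) Diff_disjoint not_False_eq_True)
  have inj: "inj_on f (vec.span ?D)"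
  proof (rule inj_onI)
    fix x y assume x: "x \<in> vec.span ?D" and y: "y \<in> vec.span ?D" and e: "f x = f y"
    have "f (x - y) = 0" using e vec.linear_diff[OF lf] by simp
    then have "x - y \<in> vec.span B" using B(3) by auto
    moreover have "x - y \<in> vec.span ?D" using x y by (rule vec.span_diff)
    ultimately have "x - y \<in> vec.span B \<inter> vec.span ?D" by (rule IntI)
    then have "x - y \<in> {0}" by (simp only: Int0)
    then show "x = y" by simp
  qed
  have rng: "range f = f ` vec.span ?D"
  proof
    show "f ` vec.span ?D \<subseteq> range f" by auto
    show "range f \<subseteq> f ` vec.span ?D"
    proof
      fix z assume "z \<in> range f"
      then obtain x where z: "z = f x" by auto
      have "x \<in> vec.span (B \<union> ?D)" unfolding BD using C(3) by (rule subsetD) simp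
      then have "x \<in> {b + d |b d. b \<in> vec.span B \<and> d \<in> vec.span ?D}" by (simp only: vec.span_Un)
      then have "\<exists>b d. x = b + d \<and> b \<in> vec.span B \<and> d \<in> vec.span ?D" by (simp only: mem_Collect_eq)
      then obtain b d where "b \<in> vec.span B" "d \<in> vec.span ?D" "x = b + d"
        by metis
      moreover have "f b = 0"
        by (rule vec.linear_eq_0_on_span[OF lf _ \<open>b \<in> vec.span B\<close>]) (use B(1) in auto)
      ultimately have "z = f d" using z vec.linear_add[OF lf] by simp
      then show "z \<in> f ` vec.span ?D" using \<open>d \<in> vec.span ?D\<close> by blast
    qed
  qed
  have "vec.dim (range f) = vec.dim (vec.span ?D)"
    unfolding rng by (rule vec.dim_image_eq[OF lf]) (simp add: inj vec.span_span)
  also have "\<dots> = card ?D" using vec.dim_span_eq_card_independent[OF indD] .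
  finally have "vec.dim (range f) = card C - card B"
    using finC C(1) by (simp add: card_Diff_subset finite_subset)
  moreover have "card B \<le> card C" using finC C(1) by (rule card_mono)
  ultimately show ?thesis using B(4) cardC by simp
qed


section \<open>Hermitian forms\<close>

lemma herm_linL: "hermitian_inner h \<Longrightarrow> h (a *s u + b *s v) w = a * h u w + b * h v w"
  by (drule hermitian_inner_def[THEN iffD1, THEN conjunct1, rule_format])
lemma herm_sym: "hermitian_inner h \<Longrightarrow> h v w = cnj (h w v)"
  by (drule hermitian_inner_def[THEN iffD1, THEN conjunct2, THEN conjunct1, rule_format])
lemma herm_pos: assumes H: "hermitian_inner h" and z: "h v v = 0" shows "v = 0"
proof (rule ccontr)
  assume "v \<noteq> 0"
  then have "Re (h v v) > 0" using H[unfolded hermitian_inner_def, THEN conjunct2, THEN conjunct2, rule_format, of v] by simp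
  with z show False by simp
qed

lemma herm_addL: "hermitian_inner h \<Longrightarrow> h (u + v) w = h u w + h v w"
  using herm_linL[of h 1 u 1 v w] by simp
lemma herm_scaleL: "hermitian_inner h \<Longrightarrow> h (a *s u) w = a * h u w"
  using herm_linL[of h a u 0 u w] by simp
lemma herm_zeroL: "hermitian_inner h \<Longrightarrow> h 0 w = 0"
  using herm_scaleL[of h 0 0 w] by simp
lemma herm_addR: assumes H: "hermitian_inner h" shows "h w (u + v) = h w u + h w v"
  using herm_sym[OF H, of w "u+v"] herm_sym[OF H, of w u] herm_sym[OF H, of w v] herm_addL[OF H, of u v w]
  by simp
lemma herm_scaleR: assumes H: "hermitian_inner h" shows "h w (a *s u) = cnj a * h w u"
  using herm_sym[OF H, of w "a *s u"] herm_sym[OF H, of w u] herm_scaleL[OF H, of a u w]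
  by simp
lemma herm_zeroR: assumes H: "hermitian_inner h" shows "h w 0 = 0"
  using herm_sym[OF H, of w 0] herm_zeroL[OF H, of w] by simp
lemma herm_diffL: assumes H: "hermitian_inner h" shows "h (u - v) w = h u w - h v w"
  using herm_linL[OF H, of 1 u "-1" v w] by simp
lemma herm_diffR: assumes H: "hermitian_inner h" shows "h w (u - v) = h w u - h w v"
  using herm_sym[OF H, of w "u-v"] herm_sym[OF H, of w u] herm_sym[OF H, of w v] herm_diffL[OF H, of u v w]
  by simp

lemma perp_subspace: assumes H: "hermitian_inner h" shows "vec.subspace (perp h W)"
  by (rule vec.subspaceI) (auto simp: perp_def herm_zeroR[OF H] herm_addR[OF H] herm_scaleR[OF H])

lemma perp_antimono: "A \<subseteq> B \<Longrightarrow> perp h B \<subseteq> perp h A"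
  by (auto simp: perp_def)

lemma perp_span: assumes H: "hermitian_inner h" shows "perp h (vec.span W) = perp h W"
proof
  show "perp h (vec.span W) \<subseteq> perp h W" by (rule perp_antimono) (rule vec.span_superset)
  show "perp h W \<subseteq> perp h (vec.span W)"
  proof
    fix u assume u: "u \<in> perp h W"
    have "\<forall>w\<in>vec.span W. h w u = 0"
    proof
      fix w assume "w \<in> vec.span W"
      then show "h w u = 0"
      proof (induction rule: vec.span_induct_alt)
        case base then show ?case by (rule herm_zeroL[OF H])
      next
        case (step c x y) then show ?case using u by (simp add: herm_addL[OF H] herm_scaleL[OF H] perp_def)
      qed
    qed
    then show "u \<in> perp h (vec.span W)" by (simp add: perp_def)
  qed
qed

lemma perp_Int: assumes H: "hermitian_inner h" shows "W \<inter> perp h W \<subseteq> {0}"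
proof
  fix w assume "w \<in> W \<inter> perp h W"
  then have "h w w = 0" by (auto simp: perp_def)
  then show "w \<in> {0}" using herm_pos[OF H] by simp
qed

lemma dim_perp_lower:
  assumes H: "hermitian_inner h" and fB: "finite B" and cB: "card B \<le> CARD('n)"
  shows "CARD('n) \<le> vec.dim (perp h (B :: (complex^'n) set)) + card B"
proof -
  obtain \<sigma> :: "complex^'n \<Rightarrow> 'n" where \<sigma>: "\<sigma> ` B \<subseteq> UNIV" "inj_on \<sigma> B"
    using card_le_inj[OF fB finite_class.finite_UNIV] cB by auto
  define \<beta> where "\<beta> j = (if j \<in> \<sigma> ` B then inv_into B \<sigma> j else 0)" for j
  define L where "L u = (\<chi> j. cnj (h (\<beta> j) u))" for u
  have lin: "Vector_Spaces.linear (*s) (*s) L"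
    unfolding Vector_Spaces.linear_iff
  proof (intro conjI allI)
    show "vector_space ((*s) :: complex \<Rightarrow> complex^'n \<Rightarrow> _)" by (rule vec.vector_space_axioms)
    show "vector_space ((*s) :: complex \<Rightarrow> complex^'n \<Rightarrow> _)" by (rule vec.vector_space_axioms)
    fix x y show "L (x + y) = L x + L y"
      by (simp add: L_def herm_addR[OF H] vec_eq_iff)
  next
    fix c x show "L (c *s x) = c *s L x"
      by (simp add: L_def herm_scaleR[OF H] vec_eq_iff)
  qed
  have ker: "{x. L x = 0} = perp h B"
  proof (intro Set.set_eqI iffI)
    fix u assume "u \<in> {x. L x = 0}"
    then have "\<forall>j. h (\<beta> j) u = 0" by (simp add: L_def vec_eq_iff)
    then have "\<forall>b\<in>B. h b u = 0"
      by (metis (no_types, lifting) \<beta>_def \<sigma>(2) image_eqI inv_into_f_f)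
    then show "u \<in> perp h B" by (simp add: perp_def)
  next
    fix u assume "u \<in> perp h B"
    then have "\<forall>j. h (\<beta> j) u = 0"
      by (auto simp: perp_def \<beta>_def herm_zeroL[OF H] inv_into_into)
    then show "u \<in> {x. L x = 0}" by (simp add: L_def vec_eq_iff)
  qed
  have rL: "range L \<subseteq> {x. \<forall>i. i \<notin> \<sigma> ` B \<longrightarrow> x $ i = 0}"
    by (auto simp: L_def \<beta>_def herm_zeroL[OF H])
  have "vec.dim (range L) \<le> card (\<sigma> ` B)"
    by (rule order.trans[OF vec.dim_subset[OF rL]]) (simp only: dim_substandard_cart order.refl)
  also have "\<dots> = card B" using \<sigma>(2) by (rule card_image)
  finally show ?thesis using rank_nullity[OF lin] ker by simp
qed

lemma dim_perp:
  assumes H: "hermitian_inner h" and W: "vec.subspace (W :: (complex^'n) set)"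
  shows "vec.dim W + vec.dim (perp h W) = CARD('n)"
proof (rule antisym)
  obtain B where B: "B \<subseteq> W" "vec.independent B" "W \<subseteq> vec.span B" "card B = vec.dim W"
    using vec.basis_exists[of W] by metis
  have "vec.span B = W" using B vec.span_subspace W by (metis)
  then have pB: "perp h W = perp h B" using perp_span[OF H, of B] by simp
  have fB: "finite B" using B(2) by (rule vec.finiteI_independent)
  have "card B \<le> CARD('n)" using B(4) dim_subset_UNIV_cart_gen[of W] by simp
  from dim_perp_lower[OF H fB this] show "CARD('n) \<le> vec.dim W + vec.dim (perp h W)"
    using pB B(4) by simp
next
  have sP: "vec.subspace (perp h W)" by (rule perp_subspace[OF H])
  have "vec.dim {x + y |x y. x \<in> W \<and> y \<in> perp h W} + vec.dim (W \<inter> perp h W) = vec.dim W + vec.dim (perp h W)"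
    by (rule vec.dim_sums_Int[OF W sP])
  moreover have "vec.dim (W \<inter> perp h W) = 0"
    by (rule vec.dim_eq_0[THEN iffD2]) (rule perp_Int[OF H])
  moreover have "vec.dim {x + y |x y. x \<in> W \<and> y \<in> perp h W} \<le> CARD('n)"
    by (rule dim_subset_UNIV_cart_gen)
  ultimately show "vec.dim W + vec.dim (perp h W) \<le> CARD('n)" by linarith
qed

lemma perp_perp:
  assumes H: "hermitian_inner h" and W: "vec.subspace (W :: (complex^'n) set)"
  shows "perp h (perp h W) = W"
proof -
  have sub: "W \<subseteq> perp h (perp h W)"
  proof
    fix w assume "w \<in> W"
    then show "w \<in> perp h (perp h W)"
      by (auto simp: perp_def) (metis complex_cnj_zero herm_sym[OF H])
  qed
  have "vec.dim (perp h (perp h W)) = vec.dim W"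
    using dim_perp[OF H W] dim_perp[OF H perp_subspace[OF H, of W]] by simp
  then show ?thesis
    using vec.subspace_dim_equal[OF W perp_subspace[OF H] sub] by simp
qed


section \<open>Annihilators\<close>

definition Ann :: "(complex^'n) set \<Rightarrow> (complex^'n) set" where
  "Ann X = {\<xi>. \<forall>u\<in>X. pair \<xi> u = 0}"

lemma pair_sym: "pair x y = pair y x"
  by (simp add: pair_def mult.commute)
lemma pair_linR: "pair \<xi> (a *s u + b *s v) = a * pair \<xi> u + b * pair \<xi> v"
  by (simp add: pair_def algebra_simps sum.distrib sum_distrib_left)
lemma pair_zeroR: "pair \<xi> 0 = 0"
  by (simp add: pair_def)

lemma Ann_subspace: "vec.subspace (Ann X)"
proof (rule vec.subspaceI)
  show "0 \<in> Ann X" by (simp add: Ann_def pair_def)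
next
  fix x y assume "x \<in> Ann X" "y \<in> Ann X"
  then show "x + y \<in> Ann X" by (simp add: Ann_def pair_def algebra_simps sum.distrib)
next
  fix c x assume "x \<in> Ann X"
  then show "c *s x \<in> Ann X" by (simp add: Ann_def pair_def algebra_simps sum_distrib_left[symmetric])
qed

lemma Ann_antimono: "A \<subseteq> B \<Longrightarrow> Ann B \<subseteq> Ann A"
  by (auto simp: Ann_def)

lemma Ann_Un: "Ann (A \<union> B) = Ann A \<inter> Ann B"
  by (auto simp: Ann_def)

lemma Ann_span: "Ann (vec.span X) = Ann X"
proof
  show "Ann (vec.span X) \<subseteq> Ann X" by (rule Ann_antimono) (rule vec.span_superset)
  show "Ann X \<subseteq> Ann (vec.span X)"
  proof
    fix \<xi> assume x: "\<xi> \<in> Ann X"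
    have "\<forall>u\<in>vec.span X. pair \<xi> u = 0"
    proof
      fix u assume "u \<in> vec.span X"
      then show "pair \<xi> u = 0"
      proof (induction rule: vec.span_induct_alt)
        case base then show ?case by (rule pair_zeroR)
      next
        case (step c x y)
        have "pair \<xi> (c *s x + y) = pair \<xi> (c *s x + 1 *s y)" by simp
        also have "\<dots> = c * pair \<xi> x + 1 * pair \<xi> y" by (rule pair_linR)
        finally show ?case using step x by (simp add: Ann_def)
      qed
    qed
    then show "\<xi> \<in> Ann (vec.span X)" by (simp add: Ann_def)
  qed
qed

lemma pair_axis: "pair \<xi> (axis i 1) = \<xi> $ i"
proof -
  have "pair \<xi> (axis i 1) = (\<Sum>j\<in>UNIV. if j = i then \<xi> $ j else 0)"
    unfolding pair_def by (rule sum.cong) (auto simp: axis_def)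
  then show ?thesis by simp
qed

lemma Ann_UNIV: "Ann UNIV = {0}"
proof
  show "Ann UNIV \<subseteq> {0}"
  proof
    fix \<xi> assume "\<xi> \<in> Ann UNIV"
    then have "\<forall>i. \<xi> $ i = 0" by (simp add: Ann_def pair_axis[symmetric])
    then show "\<xi> \<in> {0}" by (simp add: vec_eq_iff)
  qed
  show "{0} \<subseteq> Ann UNIV" by (simp add: Ann_def pair_def)
qed

definition cv :: "complex^'n \<Rightarrow> complex^'n" where "cv x = (\<chi> i. cnj (x $ i))"
definition sform :: "complex^'n \<Rightarrow> complex^'n \<Rightarrow> complex" where "sform x y = pair x (cv y)"

lemma cv_cv[simp]: "cv (cv x) = x" by (simp add: cv_def vec_eq_iff)
lemma cv_add: "cv (x + y) = cv x + cv y" by (simp add: cv_def vec_eq_iff)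
lemma cv_scale: "cv (c *s x) = cnj c *s cv x" by (simp add: cv_def vec_eq_iff)
lemma cv_zero[simp]: "cv 0 = 0" by (simp add: cv_def vec_eq_iff)
lemma cv_sum: "cv (sum f A) = (\<Sum>a\<in>A. cv (f a))" by (simp add: cv_def vec_eq_iff)
lemma inj_cv: "inj cv" by (metis cv_cv injI)

lemma sform_herm: "hermitian_inner sform"
  unfolding hermitian_inner_def
proof (intro conjI allI impI)
  fix a b u v w show "sform (a *s u + b *s v) w = a * sform u w + b * sform v w"
    by (simp add: sform_def pair_def algebra_simps sum.distrib sum_distrib_left)
next
  fix v w :: "complex^'n" show "sform v w = cnj (sform w v)"
    by (simp add: sform_def pair_def cv_def mult.commute)
next
  fix v :: "complex^'n" assume "v \<noteq> 0"
  then obtain i where i: "v $ i \<noteq> 0" by (auto simp: vec_eq_iff)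
  have e: "sform v v = (\<Sum>j\<in>UNIV. complex_of_real ((cmod (v $ j))\<^sup>2))"
    by (simp add: sform_def pair_def cv_def complex_mult_cnj cmod_def)
  show "Im (sform v v) = 0" by (simp add: e)
  have "0 < (cmod (v $ i))\<^sup>2" using i by simp
  also have "\<dots> \<le> (\<Sum>j\<in>UNIV. (cmod (v $ j))\<^sup>2)"
    by (rule member_le_sum) auto
  finally show "0 < Re (sform v v)" by (simp add: e)
qed

lemma Ann_eq_perp: "Ann X = perp sform (cv ` X)"
proof -
  have e: "sform (cv u) \<xi> = cnj (pair \<xi> u)" for u \<xi> :: "complex^'n"
    by (simp add: sform_def pair_def cv_def mult.commute)
  show ?thesis by (auto simp: Ann_def perp_def e)
qed

lemma span_cv: "cv ` vec.span S \<subseteq> vec.span (cv ` S)"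
proof
  fix y assume "y \<in> cv ` vec.span S"
  then obtain x where x: "x \<in> vec.span S" "y = cv x" by blast
  have "cv x \<in> vec.span (cv ` S)"
    using x(1)
  proof (induction rule: vec.span_induct_alt)
    case base then show ?case by (simp add: vec.span_zero)
  next
    case (step c x y)
    have "cv (c *s x + y) = cnj c *s cv x + cv y" by (simp add: cv_add cv_scale)
    moreover have "cv x \<in> vec.span (cv ` S)" using step(1) by (simp add: vec.span_base)
    ultimately show ?case using step(2) by (simp add: vec.span_add vec.span_scale)
  qed
  then show "y \<in> vec.span (cv ` S)" using x by simp
qed

lemma indep_cv: assumes ind: "vec.independent S" shows "vec.independent (cv ` S)"
proof
  assume "vec.dependent (cv ` S)"
  then obtain t u where t: "finite t" "t \<subseteq> cv ` S" "(\<Sum>v\<in>t. u v *s v) = 0" "\<exists>v\<in>t. u v \<noteq> 0"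
    unfolding vec.dependent_explicit by blast
  define t' where "t' = cv ` t"
  define u' where "u' x = cnj (u (cv x))" for x
  have "t' \<subseteq> S" using t(2) by (auto simp: t'_def)
  moreover have "finite t'" using t(1) by (simp add: t'_def)
  moreover have "(\<Sum>v\<in>t'. u' v *s v) = 0"
  proof -
    have "(\<Sum>v\<in>t'. u' v *s v) = (\<Sum>w\<in>t. u' (cv w) *s cv w)"
      unfolding t'_def by (rule sum.reindex[unfolded comp_def]) (rule inj_on_subset[OF inj_cv], simp)
    also have "\<dots> = cv (\<Sum>w\<in>t. u w *s w)" by (simp add: cv_sum cv_scale u'_def)
    finally show ?thesis using t(3) by simp
  qed
  moreover have "\<exists>v\<in>t'. u' v \<noteq> 0" using t(4) by (auto simp: t'_def u'_def)
  ultimately have "vec.dependent S" unfolding vec.dependent_explicit by blast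
  then show False using ind by simp
qed

lemma dim_cv: "vec.dim (cv ` W) = vec.dim W"
proof -
  obtain B where B: "B \<subseteq> W" "vec.independent B" "W \<subseteq> vec.span B" "card B = vec.dim W"
    using vec.basis_exists[of W] by metis
  have "cv ` W \<subseteq> cv ` vec.span B" using B(3) by (rule image_mono)
  also have "\<dots> \<subseteq> vec.span (cv ` B)" by (rule span_cv)
  finally have sp: "cv ` W \<subseteq> vec.span (cv ` B)" .
  have "card (cv ` B) = vec.dim (cv ` W)"
    by (rule vec.basis_card_eq_dim) (use B(1) sp indep_cv[OF B(2)] in auto)
  moreover have "card (cv ` B) = card B" by (rule card_image) (rule inj_on_subset[OF inj_cv], simp)
  ultimately show ?thesis using B(4) by simp
qed

lemma subspace_cv: assumes W: "vec.subspace W" shows "vec.subspace (cv ` W)"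
proof (rule vec.subspaceI)
  show "0 \<in> cv ` W" using vec.subspace_0[OF W] by (metis cv_zero image_eqI)
next
  fix x y assume "x \<in> cv ` W" "y \<in> cv ` W"
  then obtain a b where "a \<in> W" "b \<in> W" "x = cv a" "y = cv b" by blast
  then show "x + y \<in> cv ` W" using vec.subspace_add[OF W] by (metis cv_add image_eqI)
next
  fix c x assume "x \<in> cv ` W"
  then obtain a where "a \<in> W" "x = cv a" by blast
  then have "c *s x = cv (cnj c *s a)" by (simp add: cv_scale)
  then show "c *s x \<in> cv ` W" using vec.subspace_scale[OF W \<open>a \<in> W\<close>] by blast
qed

lemma dim_Ann: assumes W: "vec.subspace (W :: (complex^'n) set)"
  shows "vec.dim (Ann W) + vec.dim W = CARD('n)"
  using dim_perp[OF sform_herm subspace_cv[OF W]] by (simp add: Ann_eq_perp dim_cv)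


section \<open>Geometry of fixed spaces\<close>

lemma full_of_dim: assumes S: "vec.subspace (S :: ('a::field^'n) set)" and d: "vec.dim S = CARD('n)"
  shows "S = UNIV"
  by (rule vec.subspace_dim_equal[OF S vec.subspace_UNIV]) (simp_all add: d vec_dim_card card_cart_basis)

lemma span_Un_sub: assumes S: "vec.subspace S" and T: "vec.subspace T"
  shows "vec.span (S \<union> T) = {x + y |x y. x \<in> S \<and> y \<in> T}"
proof -
  have e1: "vec.span S = S" using S by (simp add: vec.span_eq_iff)
  have e2: "vec.span T = T" using T by (simp add: vec.span_eq_iff)
  show ?thesis by (subst vec.span_Un) (simp only: e1 e2)
qed

lemma sum_full:
  assumes S: "vec.subspace (S :: ('a::field^'n) set)" and T: "vec.subspace T"
    and i: "S \<inter> T \<subseteq> {0}" and d: "vec.dim S + vec.dim T = CARD('n)"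
  shows "\<exists>a\<in>S. \<exists>b\<in>T. x = a + b"
proof -
  let ?ST = "{x + y |x y. x \<in> S \<and> y \<in> T}"
  have "vec.dim ?ST + vec.dim (S \<inter> T) = vec.dim S + vec.dim T" by (rule vec.dim_sums_Int[OF S T])
  moreover have "vec.dim (S \<inter> T) = 0" using i by (rule vec.dim_eq_0[THEN iffD2])
  ultimately have "vec.dim ?ST = CARD('n)" using d by simp
  moreover have "vec.subspace ?ST"
  proof -
    have "?ST = vec.span (S \<union> T)" using span_Un_sub[OF S T] by simp
    then show ?thesis by (simp add: vec.subspace_span)
  qed
  ultimately have "?ST = UNIV" using full_of_dim by blast
  then have "x \<in> ?ST" by simp
  then show ?thesis by blast
qed

lemma fixsp_subspace: "vec.subspace (fixsp A)"
  by (rule vec.subspaceI) (auto simp: fixsp_def matrix_vector_right_distrib vec.scale)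

lemma perp_UNIV: assumes H: "hermitian_inner h" shows "perp h UNIV = {0}"
proof
  show "perp h UNIV \<subseteq> {0}" using perp_Int[OF H, of UNIV] by simp
  show "{0} \<subseteq> perp h UNIV" using vec.subspace_0[OF perp_subspace[OF H]] by simp
qed

lemma span_of_indep_list:
  assumes ind: "vec.independent (set l)" and dl: "distinct l" and sub: "set l \<subseteq> V"
    and V: "vec.subspace V" and len: "length l = vec.dim V"
  shows "vec.span (set l) = V"
proof (rule vec.span_subspace[OF sub _ V])
  have "card (set l) = vec.dim V" using dl len by (simp add: distinct_card)
  then show "V \<subseteq> vec.span (set l)" using vec.card_eq_dim[OF sub] ind by simp
qed

lemma pair_mv2: "pair x (M *v v) = pair (x v* M) v"
  by (simp add: pair_def matrix_vector_mult_def vector_matrix_mult_def sum_distrib_left sum_distrib_right mult_ac)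
     (rule sum.swap)

lemma mv_inv: "A' ** A = mat 1 \<Longrightarrow> A' *v (A *v v) = v"
  by (simp add: matrix_vector_mul_assoc)

lemma geo:
  fixes A A' B :: "complex^'n^'n" and h :: "complex^'n \<Rightarrow> complex^'n \<Rightarrow> complex"
  assumes H: "hermitian_inner h"
    and uA: "\<forall>v w. h (A *v v) (A *v w) = h v w" and uB: "\<forall>v w. h (B *v v) (B *v w) = h v w"
    and inv: "A' ** A = mat 1"
    and ys: "set ys \<subseteq> Ann (fixsp A)" "length ys = CARD('n) - vec.dim (fixsp A)"
    and ws0: "set ws0 \<subseteq> Ann (fixsp B)" "length ws0 = CARD('n) - vec.dim (fixsp B)"
    and ws: "ws = map (\<lambda>\<xi>. \<xi> v* A') ws0"
    and ind: "distinct (ys @ ws)" "vec.independent (set (ys @ ws))"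
  shows "CARD('n) - vec.dim (fixsp (A ** B)) = length ys + length ws"
    and "set (ys @ ws) \<subseteq> Ann (fixsp (A ** B))"
    and "\<forall>\<xi>. \<exists>a\<in>Ann (perp h (fixsp (A ** B))). \<xi> - a \<in> vec.span (set (ys @ ws))"
    and "perp h (fixsp A) \<subseteq> perp h (fixsp (A ** B))"
    and "(\<lambda>v. A *v v) ` perp h (fixsp B) \<subseteq> perp h (fixsp (A ** B))"
proof -
  let ?n = "CARD('n)"
  let ?UA = "fixsp A" and ?UB = "fixsp B" and ?UC = "fixsp (A ** B)"
  let ?AUB = "(\<lambda>v. A *v v) ` ?UB"
  have sUA: "vec.subspace ?UA" and sUB: "vec.subspace ?UB" and sUC: "vec.subspace ?UC"
    by (rule fixsp_subspace)+
  have linA: "Vector_Spaces.linear (*s) (*s) ((*v) A)" by (rule matrix_vector_mul_linear_gen)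
  have sAUB: "vec.subspace ?AUB" using vec.linear_subspace_image[OF linA sUB] by simp
  have injA: "inj ((*v) A)" by (rule injI) (metis inv mv_inv)
  have dAUB: "vec.dim ?AUB = vec.dim ?UB"
    using vec.dim_image_eq[OF linA, of ?UB] injA by (simp add: inj_on_def)
  have dimle: "vec.dim S \<le> ?n" for S :: "(complex^'n) set" by (rule dim_subset_UNIV_cart_gen)
  have dA: "vec.dim (Ann ?UA) = ?n - vec.dim ?UA" using dim_Ann[OF sUA] by simp
  have dB: "vec.dim (Ann ?AUB) = ?n - vec.dim ?UB" using dim_Ann[OF sAUB] dAUB by simp
  have wsAnn: "set ws \<subseteq> Ann ?AUB"
  proof
    fix \<eta> assume "\<eta> \<in> set ws"
    then obtain \<xi> where \<xi>: "\<xi> \<in> set ws0" "\<eta> = \<xi> v* A'" using ws by auto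
    have "pair \<eta> (A *v u) = 0" if u: "u \<in> ?UB" for u
    proof -
      have "pair \<eta> (A *v u) = pair \<xi> (A' *v (A *v u))" by (simp add: \<xi>(2) pair_mv2)
      also have "\<dots> = pair \<xi> u" by (simp add: mv_inv[OF inv])
      also have "\<dots> = 0" using \<xi>(1) ws0(1) u by (auto simp: Ann_def)
      finally show ?thesis .
    qed
    then show "\<eta> \<in> Ann ?AUB" by (auto simp: Ann_def)
  qed
  have indys: "vec.independent (set ys)" using ind(2) by (rule vec.independent_mono) simp
  have indws: "vec.independent (set ws)" using ind(2) by (rule vec.independent_mono) simp
  have spys: "vec.span (set ys) = Ann ?UA"
    by (rule span_of_indep_list[OF indys _ ys(1) Ann_subspace]) (use ind(1) ys(2) dA in auto)
  have spws: "vec.span (set ws) = Ann ?AUB"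
    by (rule span_of_indep_list[OF indws _ wsAnn Ann_subspace]) (use ind(1) ws0(2) ws dB in auto)
  have disj: "set ys \<inter> set ws = {}" using ind(1) by simp
  have "vec.span (set ys) \<inter> vec.span (set ws) = {0}"
    by (rule span_Int_indep) (use ind(2) disj in simp_all)
  then have AnnInt: "Ann (?UA \<union> ?AUB) = {0}" by (simp add: Ann_Un spys spws)
  have "vec.dim (Ann (vec.span (?UA \<union> ?AUB))) + vec.dim (vec.span (?UA \<union> ?AUB)) = ?n"
    by (rule dim_Ann) (rule vec.subspace_span)
  then have "vec.dim (vec.span (?UA \<union> ?AUB)) = ?n" by (simp add: Ann_span AnnInt)
  then have spanfull: "vec.span (?UA \<union> ?AUB) = UNIV" by (rule full_of_dim[OF vec.subspace_span])
  have sumeq: "{x + y |x y. x \<in> ?UA \<and> y \<in> ?AUB} = UNIV"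
    using spanfull span_Un_sub[OF sUA sAUB] by simp
  have dsum: "vec.dim {x + y |x y. x \<in> ?UA \<and> y \<in> ?AUB} + vec.dim (?UA \<inter> ?AUB) = vec.dim ?UA + vec.dim ?AUB"
    by (rule vec.dim_sums_Int[OF sUA sAUB])
  then have dInt: "?n + vec.dim (?UA \<inter> ?AUB) = vec.dim ?UA + vec.dim ?UB"
    by (simp add: sumeq vec_dim_card dAUB card_cart_basis)
  have pInt: "perp h ?UA \<inter> perp h ?AUB \<subseteq> {0}"
  proof -
    have "perp h ?UA \<inter> perp h ?AUB = perp h (?UA \<union> ?AUB)" by (auto simp: perp_def)
    also have "\<dots> = perp h (vec.span (?UA \<union> ?AUB))" by (simp add: perp_span[OF H])
    also have "\<dots> = {0}" by (simp add: spanfull perp_UNIV[OF H])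
    finally show ?thesis by simp
  qed
  have G1A: "v - A *v v \<in> perp h ?UA" for v
  proof -
    have "h w (v - A *v v) = 0" if "w \<in> ?UA" for w
    proof -
      have "A *v w = w" using that by (simp add: fixsp_def)
      then have "h w (A *v v) = h w v" using uA by metis
      then show ?thesis by (simp add: herm_diffR[OF H])
    qed
    then show ?thesis by (simp add: perp_def)
  qed
  have imgperp: "(\<lambda>v. A *v v) ` perp h ?UB \<subseteq> perp h ?AUB"
    using uA by (auto simp: perp_def)
  have G1B: "A *v (v - B *v v) \<in> perp h ?AUB" for v
  proof -
    have "h w (v - B *v v) = 0" if "w \<in> ?UB" for w
    proof -
      have "B *v w = w" using that by (simp add: fixsp_def)
      then have "h w (B *v v) = h w v" using uB by metis
      then show ?thesis by (simp add: herm_diffR[OF H])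
    qed
    then have "v - B *v v \<in> perp h ?UB" by (simp add: perp_def)
    then show ?thesis using imgperp by blast
  qed
  have UCeq: "?UC = ?UA \<inter> ?AUB"
  proof (intro Set.set_eqI iffI)
    fix v assume "v \<in> ?UC"
    then have Cv: "A *v (B *v v) = v" by (simp add: fixsp_def matrix_vector_mul_assoc)
    have "(v - A *v v) + A *v (v - B *v v) = 0"
      using Cv by (simp add: matrix_vector_right_distrib vector_sub_project_orthogonal
          matrix_vector_mult_diff_distrib algebra_simps)
    then have e: "v - A *v v = - (A *v (v - B *v v))" by (simp add: eq_neg_iff_add_eq_0)
    have "- (A *v (v - B *v v)) \<in> perp h ?AUB"
      using G1B by (rule vec.subspace_neg[OF perp_subspace[OF H]])
    then have "v - A *v v \<in> perp h ?AUB" using e by simp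
    then have "v - A *v v \<in> perp h ?UA \<inter> perp h ?AUB" using G1A[of v] by blast
    then have z: "v - A *v v = 0" using pInt by blast
    then have Av: "A *v v = v" by simp
    then have "A *v (v - B *v v) = 0" using e z by simp
    then have "A' *v (A *v (v - B *v v)) = 0" by simp
    then have "v - B *v v = 0" by (simp only: mv_inv[OF inv])
    then have Bv: "B *v v = v" by simp
    show "v \<in> ?UA \<inter> ?AUB"
    proof
      show "v \<in> ?UA" using Av by (simp add: fixsp_def)
      have "v = A *v v" using Av by simp
      moreover have "v \<in> ?UB" using Bv by (simp add: fixsp_def)
      ultimately show "v \<in> ?AUB" by blast
    qed
  next
    fix v assume "v \<in> ?UA \<inter> ?AUB"
    then obtain u where Av: "A *v v = v" and u: "B *v u = u" "v = A *v u" by (auto simp: fixsp_def)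
    have "A *v (A *v u) = A *v u" using Av u(2) by simp
    then have "A' *v (A *v (A *v u)) = A' *v (A *v u)" by simp
    then have "A *v u = u" by (simp only: mv_inv[OF inv])
    then have "v = u" using u(2) by simp
    then show "v \<in> ?UC" using u(1) Av by (simp add: fixsp_def matrix_vector_mul_assoc[symmetric])
  qed
  have dUC: "?n + vec.dim ?UC = vec.dim ?UA + vec.dim ?UB" using dInt UCeq by simp
  have le1: "vec.dim ?UA \<le> ?n" "vec.dim ?UB \<le> ?n" "vec.dim ?UC \<le> ?n" by (rule dimle)+
  have lens: "length ys + length ws = ?n - vec.dim ?UC"
    using ys(2) ws0(2) ws dUC le1 by simp
  show "?n - vec.dim ?UC = length ys + length ws" using lens by simp
  have sub1: "?UC \<subseteq> ?UA" and sub2: "?UC \<subseteq> ?AUB" using UCeq by auto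
  have setsub: "set (ys @ ws) \<subseteq> Ann ?UC"
    using ys(1) wsAnn Ann_antimono[OF sub1] Ann_antimono[OF sub2] by auto
  show "set (ys @ ws) \<subseteq> Ann ?UC" by (rule setsub)
  have spanAll: "vec.span (set (ys @ ws)) = Ann ?UC"
    by (rule span_of_indep_list[OF ind(2) ind(1) setsub Ann_subspace]) (use dim_Ann[OF sUC] lens in simp)
  have sPC: "vec.subspace (perp h ?UC)" by (rule perp_subspace[OF H])
  have dP: "vec.dim ?UC + vec.dim (perp h ?UC) = ?n" by (rule dim_perp[OF H sUC])
  have full2: "vec.span (?UC \<union> perp h ?UC) = UNIV"
  proof -
    have "{x + y |x y. x \<in> ?UC \<and> y \<in> perp h ?UC} = UNIV"
    proof -
      have "\<exists>a\<in>?UC. \<exists>b\<in>perp h ?UC. x = a + b" for x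
        by (rule sum_full[OF sUC sPC perp_Int[OF H] dP])
      then show ?thesis by blast
    qed
    then show ?thesis using span_Un_sub[OF sUC sPC] by simp
  qed
  have AI: "Ann (perp h ?UC) \<inter> Ann ?UC \<subseteq> {0}"
  proof -
    have "Ann (perp h ?UC) \<inter> Ann ?UC = Ann (vec.span (?UC \<union> perp h ?UC))"
      by (simp add: Ann_span Ann_Un Int_commute)
    then show ?thesis by (simp add: full2 Ann_UNIV)
  qed
  have dAA: "vec.dim (Ann (perp h ?UC)) + vec.dim (Ann ?UC) = ?n"
    using dim_Ann[OF sPC] dim_Ann[OF sUC] dP by simp
  show "\<forall>\<xi>. \<exists>a\<in>Ann (perp h ?UC). \<xi> - a \<in> vec.span (set (ys @ ws))"
  proof
    fix \<xi>
    obtain a b where ab: "a \<in> Ann (perp h ?UC)" "b \<in> Ann ?UC" "\<xi> = a + b"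
      using sum_full[OF Ann_subspace Ann_subspace AI dAA] by blast
    then show "\<exists>a\<in>Ann (perp h ?UC). \<xi> - a \<in> vec.span (set (ys @ ws))"
      using spanAll by (intro bexI[of _ a]) auto
  qed
  show "perp h ?UA \<subseteq> perp h ?UC" by (rule perp_antimono[OF sub1])
  show "(\<lambda>v. A *v v) ` perp h ?UB \<subseteq> perp h ?UC"
    using imgperp perp_antimono[OF sub2] by blast
qed

lemma wl_dependent:
  assumes "\<not> (distinct l \<and> vec.independent (set l))"
  shows "wedge_list l = (\<lambda>vs. 0)"
  using assms
proof (induction l)
  case Nil then show ?case by (simp add: vec.dependent_explicit)
next
  case (Cons x l)
  show ?case
  proof (cases "distinct l \<and> vec.independent (set l)")
    case False
    then have "wedge_list l = (\<lambda>vs. 0)" using Cons.IH by simp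
    then show ?thesis by (simp add: owedge_zeroR_fun)
  next
    case True
    show ?thesis
    proof (cases "x \<in> set l")
      case True then show ?thesis by (rule wl_dup)
    next
      case False
      with True Cons.prems have "\<not> vec.independent (insert x (set l))" by simp
      then have "x \<in> vec.span (set l)" using True False vec.independent_insert by metis
      then show ?thesis by (rule wl_span_zero)
    qed
  qed
qed

lemma wl_swap_mid:
  "wedge_list (a @ b @ c @ d) = (\<lambda>vs. (-1) ^ (length b * length c) * wedge_list (a @ c @ b @ d) vs)"
proof -
  have "wedge_list (a @ b @ c @ d) = owedge (wedge_list a) (owedge (owedge (wedge_list b) (wedge_list c)) (wedge_list d))"
    by (simp add: wl_append owedge_assoc)
  also have "\<dots> = (\<lambda>vs. (-1) ^ (length b * length c) * owedge (wedge_list a) (owedge (owedge (wedge_list c) (wedge_list b)) (wedge_list d)) vs)"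
    by (subst wl_comm) (simp add: owedge_scaleL_fun owedge_scaleR_fun)
  also have "\<dots> = (\<lambda>vs. (-1) ^ (length b * length c) * wedge_list (a @ c @ b @ d) vs)"
    by (simp add: wl_append owedge_assoc)
  finally show ?thesis .
qed

lemma fspan_add: "f \<in> fspan S \<Longrightarrow> g \<in> fspan S \<Longrightarrow> (\<lambda>x. f x + g x) \<in> fspan S"
proof (induction f rule: fspan.induct)
  case fspan_zero then show ?case by simp
next
  case (fspan_step f u c)
  have "(\<lambda>x. c * f x + u x + g x) = (\<lambda>x. c * f x + (u x + g x))" by (simp add: algebra_simps)
  then show ?case using fspan_step by (simp add: fspan.fspan_step)
qed

lemma fspan_scale: "f \<in> fspan S \<Longrightarrow> (\<lambda>x. c * f x) \<in> fspan S"
proof (induction f rule: fspan.induct)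
  case fspan_zero then show ?case using fspan.fspan_zero by simp
next
  case (fspan_step f u c')
  have "(\<lambda>x. c * (c' * f x + u x)) = (\<lambda>x. (c * c') * f x + c * u x)" by (simp add: algebra_simps)
  then show ?case using fspan_step by (simp add: fspan.fspan_step)
qed

lemma fspan_base: "f \<in> S \<Longrightarrow> f \<in> fspan S"
  using fspan.fspan_step[OF _ fspan.fspan_zero, of f S 1] by simp

lemma fspan_sum: "finite I \<Longrightarrow> (\<And>i. i \<in> I \<Longrightarrow> f i \<in> fspan S) \<Longrightarrow> (\<lambda>x. \<Sum>i\<in>I. f i x) \<in> fspan S"
proof (induction I rule: finite_induct)
  case empty then show ?case using fspan.fspan_zero by simp
next
  case (insert i I)
  then show ?case using fspan_add[of "f i" S "\<lambda>x. \<Sum>i\<in>I. f i x"] by simp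
qed

lemma fspan_mono: "S \<subseteq> T \<Longrightarrow> fspan S \<subseteq> fspan T"
proof
  fix f assume ST: "S \<subseteq> T" and f: "f \<in> fspan S"
  show "f \<in> fspan T"
    using f by (induction f rule: fspan.induct) (use ST in \<open>auto intro: fspan.intros\<close>)
qed

lemma fspan_lin:
  assumes x: "x \<in> fspan A" and gen: "\<And>a. a \<in> A \<Longrightarrow> \<Psi> a \<in> fspan T"
    and z: "\<Psi> (\<lambda>z. 0) = (\<lambda>z. 0)"
    and l: "\<And>c a u. \<Psi> (\<lambda>z. c * a z + u z) = (\<lambda>z. c * \<Psi> a z + \<Psi> u z)"
  shows "\<Psi> x \<in> fspan T"
  using x
proof (induction x rule: fspan.induct)
  case fspan_zero then show ?case using z fspan.fspan_zero by simp
next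
  case (fspan_step f u c)
  then show ?case using l gen fspan_add fspan_scale by metis
qed

section \<open>Polynomials and ideals\<close>

lemma polyfun_act: "f \<in> polyfun \<Longrightarrow> (\<lambda>\<xi>. f (\<xi> v* M)) \<in> polyfun"
proof (induction f rule: polyfun.induct)
  case (polyfun_const c) then show ?case by (rule polyfun.polyfun_const)
next
  case (polyfun_lin v)
  have "(\<lambda>\<xi>. pair (\<xi> v* M) v) = (\<lambda>\<xi>. pair \<xi> (M *v v))" by (simp add: pair_mv2)
  then show ?case using polyfun.polyfun_lin by simp
next
  case (polyfun_add f g) show ?case by (rule polyfun.polyfun_add[OF polyfun_add.IH])
next
  case (polyfun_mult f g) show ?case by (rule polyfun.polyfun_mult[OF polyfun_mult.IH])
qed

lemma ideal_sub_polyfun: "q \<in> ideal_gen W \<Longrightarrow> q \<in> polyfun"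
proof (induction q rule: ideal_gen.induct)
  case ideal_gen_zero then show ?case by (rule polyfun.polyfun_const)
next
  case (ideal_gen_step w f q)
  then show ?case
    by (intro polyfun.polyfun_add polyfun.polyfun_mult polyfun.polyfun_lin) auto
qed

lemma ideal_mult: "q \<in> ideal_gen W \<Longrightarrow> f \<in> polyfun \<Longrightarrow> (\<lambda>\<xi>. q \<xi> * f \<xi>) \<in> ideal_gen W"
proof (induction q rule: ideal_gen.induct)
  case ideal_gen_zero show ?case by (simp add: ideal_gen.ideal_gen_zero)
next
  case (ideal_gen_step w g q)
  have e: "(\<lambda>\<xi>. (pair \<xi> w * g \<xi> + q \<xi>) * f \<xi>) = (\<lambda>\<xi>. pair \<xi> w * (\<lambda>\<xi>. g \<xi> * f \<xi>) \<xi> + (\<lambda>\<xi>. q \<xi> * f \<xi>) \<xi>)"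
    by (simp add: algebra_simps)
  have gf: "(\<lambda>\<xi>. g \<xi> * f \<xi>) \<in> polyfun" by (rule polyfun.polyfun_mult[OF ideal_gen_step(2) ideal_gen_step.prems])
  have qf: "(\<lambda>\<xi>. q \<xi> * f \<xi>) \<in> ideal_gen W" by (rule ideal_gen_step.IH[OF ideal_gen_step.prems])
  show ?case unfolding e by (rule ideal_gen.ideal_gen_step[OF ideal_gen_step(1) gf qf])
qed

lemma ideal_mono: "W \<subseteq> W' \<Longrightarrow> ideal_gen W \<subseteq> ideal_gen W'"
proof
  fix q assume WW: "W \<subseteq> W'" and q: "q \<in> ideal_gen W"
  show "q \<in> ideal_gen W'"
    using q by (induction q rule: ideal_gen.induct) (use WW in \<open>auto intro: ideal_gen.intros\<close>)
qed

lemma ideal_act: "q \<in> ideal_gen W \<Longrightarrow> (\<lambda>\<xi>. q (\<xi> v* M)) \<in> ideal_gen ((\<lambda>v. M *v v) ` W)"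
proof (induction q rule: ideal_gen.induct)
  case ideal_gen_zero show ?case by (simp add: ideal_gen.ideal_gen_zero)
next
  case (ideal_gen_step w f q)
  have "(\<lambda>\<xi>. pair (\<xi> v* M) w * f (\<xi> v* M) + q (\<xi> v* M))
      = (\<lambda>\<xi>. pair \<xi> (M *v w) * (\<lambda>\<xi>. f (\<xi> v* M)) \<xi> + (\<lambda>\<xi>. q (\<xi> v* M)) \<xi>)"
    by (simp add: pair_mv2)
  moreover have "M *v w \<in> (\<lambda>v. M *v v) ` W" using ideal_gen_step by simp
  moreover have "(\<lambda>\<xi>. f (\<xi> v* M)) \<in> polyfun" by (rule polyfun_act[OF ideal_gen_step(2)])
  ultimately show ?case
    using ideal_gen.ideal_gen_step[of "M *v w" "(\<lambda>v. M *v v) ` W" "\<lambda>\<xi>. f (\<xi> v* M)" "\<lambda>\<xi>. q (\<xi> v* M)"]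
      ideal_gen_step.IH by simp
qed

section \<open>The product of generators\<close>

lemma owedge_linL_fun: "owedge (\<lambda>z. c * a z + u z) b = (\<lambda>vs. c * owedge a b vs + owedge u b vs)"
  by (rule ext) (simp add: owedge_addL owedge_scaleL)
lemma owedge_linR_fun: "owedge b (\<lambda>z. c * a z + u z) = (\<lambda>vs. c * owedge b a vs + owedge b u vs)"
  by (rule ext) (simp add: owedge_addR owedge_scaleR)

lemma dualsub_Ann: "dualsub h W = Ann (perp h W)"
  by (simp add: dualsub_def Ann_def)

definition actm :: "complex^'n^'n \<Rightarrow> complex^'n^'n \<Rightarrow> ((complex^'n) \<times> (complex^'n) list \<Rightarrow> complex)
    \<Rightarrow> (complex^'n) \<times> (complex^'n) list \<Rightarrow> complex" where
  "actm A A' F = (\<lambda>(xi, vs). F (xi v* A, map (\<lambda>v. A' *v v) vs))"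

lemma core:
  fixes A A' B :: "complex^'n^'n" and h :: "complex^'n \<Rightarrow> complex^'n \<Rightarrow> complex"
  assumes H: "hermitian_inner h"
    and uA: "\<forall>v w. h (A *v v) (A *v w) = h v w" and uB: "\<forall>v w. h (B *v v) (B *v w) = h v w"
    and inv: "A' ** A = mat 1"
    and Rc: "perp h (fixsp A) \<subseteq> perp h (fixsp (A ** B)) \<Longrightarrow>
             (\<lambda>v. A *v v) ` perp h (fixsp B) \<subseteq> perp h (fixsp (A ** B)) \<Longrightarrow> fp \<in> R3"
    and cA: "codim (fixsp A) \<le> p" and cB: "codim (fixsp B) \<le> q"
    and xs: "length xs = p - codim (fixsp A)"
    and ys: "set ys \<subseteq> dualsub h (perp h (fixsp A))" "length ys = codim (fixsp A)"
    and zs: "length zs = q - codim (fixsp B)"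
    and ws0: "set ws0 \<subseteq> dualsub h (perp h (fixsp B))" "length ws0 = codim (fixsp B)"
  shows "(\<lambda>(xi, vs). fp xi * owedge (owedge (wedge_list xs) (wedge_list ys))
            (\<lambda>ws. owedge (wedge_list zs) (wedge_list ws0) (map (\<lambda>v. A' *v v) ws)) vs)
         \<in> comp_space R3 h (A ** B) (p + q)"
proof -
  let ?n = "CARD('n)"
  define zs' where "zs' = map (\<lambda>\<xi>. \<xi> v* A') zs"
  define ws where "ws = map (\<lambda>\<xi>. \<xi> v* A') ws0"
  define s where "s = (-1::complex) ^ (length ys * length zs')"
  have e1: "(\<lambda>ws'. owedge (wedge_list zs) (wedge_list ws0) (map (\<lambda>v. A' *v v) ws')) = wedge_list (zs' @ ws)"
    by (rule ext) (simp add: wl_append wl_map zs'_def ws_def del: wedge_list.simps)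
  have e2: "owedge (owedge (wedge_list xs) (wedge_list ys)) (wedge_list (zs' @ ws))
      = (\<lambda>vs. s * wedge_list ((xs @ zs') @ (ys @ ws)) vs)"
    using wl_swap_mid[of xs ys zs' ws] by (simp add: wl_append s_def del: wedge_list.simps)
  let ?T = "\<lambda>(xi, vs). fp xi * owedge (owedge (wedge_list xs) (wedge_list ys))
            (\<lambda>ws. owedge (wedge_list zs) (wedge_list ws0) (map (\<lambda>v. A' *v v) ws)) vs"
  have Teq: "?T = (\<lambda>(xi, vs). fp xi * (s * wedge_list ((xs @ zs') @ (ys @ ws)) vs))"
    by (simp only: e1 e2)
  have sUA: "vec.subspace (fixsp A)" and sUB: "vec.subspace (fixsp B)" by (rule fixsp_subspace)+
  have ysA: "set ys \<subseteq> Ann (fixsp A)" using ys(1) by (simp add: dualsub_Ann perp_perp[OF H sUA])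
  have wsB: "set ws0 \<subseteq> Ann (fixsp B)" using ws0(1) by (simp add: dualsub_Ann perp_perp[OF H sUB])
  show ?thesis
  proof (cases "distinct (ys @ ws) \<and> vec.independent (set (ys @ ws))")
    case False
    then have "wedge_list (ys @ ws) = (\<lambda>vs. 0)" by (rule wl_dependent)
    then have "wedge_list ((xs @ zs') @ (ys @ ws)) = (\<lambda>vs. 0)"
      by (simp only: wl_append[symmetric] owedge_zeroR_fun)
    then have "?T = (\<lambda>x. 0)" unfolding Teq by auto
    then show ?thesis by (simp add: comp_space_def fspan.fspan_zero)
  next
    case True
    note g = geo[OF H uA uB inv ysA ys(2)[unfolded codim_def] wsB ws0(2)[unfolded codim_def] ws_def True[THEN conjunct1] True[THEN conjunct2]]
    let ?UC = "fixsp (A ** B)"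
    have sUC: "vec.subspace ?UC" by (rule fixsp_subspace)
    define \<pi> where "\<pi> \<xi> = (SOME a. a \<in> Ann (perp h ?UC) \<and> \<xi> - a \<in> vec.span (set (ys @ ws)))" for \<xi>
    have \<pi>: "\<pi> \<xi> \<in> Ann (perp h ?UC) \<and> \<xi> - \<pi> \<xi> \<in> vec.span (set (ys @ ws))" for \<xi>
      unfolding \<pi>_def by (rule someI_ex) (use g(3) in blast)
    have "wedge_list ((xs @ zs') @ (ys @ ws)) = wedge_list (map \<pi> (xs @ zs') @ (ys @ ws))"
      by (rule wl_proj) (use \<pi> in blast)
    also have "\<dots> = owedge (wedge_list (map \<pi> (xs @ zs'))) (wedge_list (ys @ ws))"
      by (simp only: wl_append)
    finally have e3: "wedge_list ((xs @ zs') @ (ys @ ws)) = owedge (wedge_list (map \<pi> (xs @ zs'))) (wedge_list (ys @ ws))" .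
    have fp: "fp \<in> R3" by (rule Rc[OF g(4) g(5)])
    have cC: "codim ?UC = codim (fixsp A) + codim (fixsp B)"
      using g(1) ys(2) ws0(2) by (simp add: codim_def ws_def)
    have om: "wedge_list (map \<pi> (xs @ zs')) \<in> extpow (dualsub h ?UC) (p + q - codim ?UC)"
      unfolding extpow_def
    proof (rule fspan_base, intro CollectI exI conjI)
      show "wedge_list (map \<pi> (xs @ zs')) = wedge_list (map \<pi> (xs @ zs'))" ..
      show "set (map \<pi> (xs @ zs')) \<subseteq> dualsub h ?UC" using \<pi> by (auto simp: dualsub_Ann)
      show "length (map \<pi> (xs @ zs')) = p + q - codim ?UC" using xs zs cA cB cC by (simp add: zs'_def)
    qed
    have eta: "wedge_list (ys @ ws) \<in> extpow (dualsub h (perp h ?UC)) (codim ?UC)"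
      unfolding extpow_def
    proof (rule fspan_base, intro CollectI exI conjI)
      show "wedge_list (ys @ ws) = wedge_list (ys @ ws)" ..
      show "set (ys @ ws) \<subseteq> dualsub h (perp h ?UC)" using g(2) by (simp add: dualsub_Ann perp_perp[OF H sUC])
      show "length (ys @ ws) = codim ?UC" using g(1) by (simp add: codim_def)
    qed
    have le: "codim ?UC \<le> p + q" using cC cA cB by simp
    let ?gen = "\<lambda>(xi, vs). fp xi * owedge (wedge_list (map \<pi> (xs @ zs'))) (wedge_list (ys @ ws)) vs"
    have gen: "?gen \<in> {(\<lambda>(xi, vs). f xi * owedge om eta vs) | f om eta.
        codim ?UC \<le> p + q \<and> f \<in> R3 \<and>
        om \<in> extpow (dualsub h ?UC) (p + q - codim ?UC) \<and>
        eta \<in> extpow (dualsub h (perp h ?UC)) (codim ?UC)}"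
      using le fp om eta by blast
    have "?T = (\<lambda>x. s * ?gen x + (\<lambda>x. 0) x)"
      unfolding Teq e3 by (auto simp: fun_eq_iff)
    then show ?thesis unfolding comp_space_def
      using fspan.fspan_step[OF gen fspan.fspan_zero, of s] by simp
  qed
qed

lemma twedge_linL: "twedge (\<lambda>z. c * a z + u z) b = (\<lambda>z. c * twedge a b z + twedge u b z)"
  unfolding twedge_def by (auto simp: fun_eq_iff owedge_linL_fun)
lemma twedge_linR: "twedge b (\<lambda>z. c * a z + u z) = (\<lambda>z. c * twedge b a z + twedge b u z)"
  unfolding twedge_def by (auto simp: fun_eq_iff owedge_linR_fun)
lemma twedge_zeroL: "twedge (\<lambda>z. 0) b = (\<lambda>z. 0)"
  unfolding twedge_def by (auto simp: fun_eq_iff owedge_zeroL_fun)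
lemma twedge_zeroR: "twedge b (\<lambda>z. 0) = (\<lambda>z. 0)"
  unfolding twedge_def by (auto simp: fun_eq_iff owedge_zeroR_fun)
lemma actm_lin: "actm A A' (\<lambda>z. c * a z + u z) = (\<lambda>z. c * actm A A' a z + actm A A' u z)"
  unfolding actm_def by (auto simp: fun_eq_iff)
lemma actm_zero: "actm A A' (\<lambda>z. 0) = (\<lambda>z. 0)"
  unfolding actm_def by (auto simp: fun_eq_iff)

lemma tw_gen:
  "twedge (\<lambda>(xi, vs). f xi * owedge om eta vs) (actm A A' (\<lambda>(xi, vs). f' xi * owedge om' eta' vs))
   = (\<lambda>(xi, vs). (f xi * f' (xi v* A)) * owedge (owedge om eta)
        (\<lambda>ws. owedge om' eta' (map (\<lambda>v. A' *v v) ws)) vs)"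
  unfolding twedge_def actm_def by (auto simp: fun_eq_iff owedge_scaleL owedge_scaleR)

lemma fspan_lin_cs:
  assumes x: "x \<in> fspan A" and gen: "\<And>a. a \<in> A \<Longrightarrow> \<Psi> a \<in> comp_space R h M p"
    and z: "\<Psi> (\<lambda>z. 0) = (\<lambda>z. 0)"
    and l: "\<And>c a u. \<Psi> (\<lambda>z. c * a z + u z) = (\<lambda>z. c * \<Psi> a z + \<Psi> u z)"
  shows "\<Psi> x \<in> comp_space R h M p"
  unfolding comp_space_def by (rule fspan_lin[OF x gen[unfolded comp_space_def] z l])

lemma comp_prod:
  fixes A A' B :: "complex^'n^'n" and h :: "complex^'n \<Rightarrow> complex^'n \<Rightarrow> complex"
  assumes H: "hermitian_inner h"
    and uA: "\<forall>v w. h (A *v v) (A *v w) = h v w" and uB: "\<forall>v w. h (B *v v) (B *v w) = h v w"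
    and inv: "A' ** A = mat 1"
    and Rc: "perp h (fixsp A) \<subseteq> perp h (fixsp (A ** B)) \<Longrightarrow>
             (\<lambda>v. A *v v) ` perp h (fixsp B) \<subseteq> perp h (fixsp (A ** B)) \<Longrightarrow>
             \<forall>f\<in>R1. \<forall>f'\<in>R2. (\<lambda>xi. f xi * f' (xi v* A)) \<in> R3"
    and F: "F \<in> comp_space R1 h A p" and F': "F' \<in> comp_space R2 h B q"
  shows "twedge F (actm A A' F') \<in> comp_space R3 h (A ** B) (p + q)"
proof -
  let ?T = "comp_space R3 h (A ** B) (p + q)"
  let ?cA = "codim (fixsp A)" and ?cB = "codim (fixsp B)"
  define \<Phi> where "\<Phi> fp om eta om' eta' = (\<lambda>(xi, vs). fp xi * owedge (owedge om eta)
        (\<lambda>ws. owedge om' eta' (map (\<lambda>v. A' *v v) ws)) vs)" for fp :: "complex^'n \<Rightarrow> complex" and om eta om' eta'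
  let ?Rc = "\<lambda>fp :: complex^'n \<Rightarrow> complex. perp h (fixsp A) \<subseteq> perp h (fixsp (A ** B)) \<longrightarrow>
             (\<lambda>v. A *v v) ` perp h (fixsp B) \<subseteq> perp h (fixsp (A ** B)) \<longrightarrow> fp \<in> R3"
  have T_def: "?T = fspan {(\<lambda>(xi, vs). f xi * owedge om eta vs) | f om eta.
      codim (fixsp (A ** B)) \<le> p + q \<and> f \<in> R3 \<and>
      om \<in> extpow (dualsub h (fixsp (A ** B))) (p + q - codim (fixsp (A ** B))) \<and>
      eta \<in> extpow (dualsub h (perp h (fixsp (A ** B)))) (codim (fixsp (A ** B)))}"
    by (simp add: comp_space_def)
  have L0: "\<Phi> fp (wedge_list xs) (wedge_list ys) (wedge_list zs) (wedge_list ws0) \<in> ?T"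
    if "?Rc fp" "?cA \<le> p" "?cB \<le> q" "length xs = p - ?cA"
       "set ys \<subseteq> dualsub h (perp h (fixsp A))" "length ys = ?cA" "length zs = q - ?cB"
       "set ws0 \<subseteq> dualsub h (perp h (fixsp B))" "length ws0 = ?cB"
     for fp xs ys zs ws0
    unfolding \<Phi>_def by (rule core[OF H uA uB inv]) (use that in auto)
  have L1: "\<Phi> fp (wedge_list xs) (wedge_list ys) (wedge_list zs) eta' \<in> ?T"
    if "?Rc fp" "?cA \<le> p" "?cB \<le> q" "length xs = p - ?cA"
       "set ys \<subseteq> dualsub h (perp h (fixsp A))" "length ys = ?cA" "length zs = q - ?cB"
       "eta' \<in> extpow (dualsub h (perp h (fixsp B))) ?cB"
     for fp xs ys zs eta'
  proof (rule fspan_lin_cs[where \<Psi> = "\<Phi> fp (wedge_list xs) (wedge_list ys) (wedge_list zs)"])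
    show "eta' \<in> fspan {wedge_list xis |xis. set xis \<subseteq> dualsub h (perp h (fixsp B)) \<and> length xis = ?cB}"
      using that(8) by (simp add: extpow_def)
  next
    fix a assume "a \<in> {wedge_list xis |xis. set xis \<subseteq> dualsub h (perp h (fixsp B)) \<and> length xis = ?cB}"
    then obtain ws0 where "a = wedge_list ws0" "set ws0 \<subseteq> dualsub h (perp h (fixsp B))" "length ws0 = ?cB" by blast
    then show "\<Phi> fp (wedge_list xs) (wedge_list ys) (wedge_list zs) a \<in> ?T"
      using L0 that by simp
  next
    show "\<Phi> fp (wedge_list xs) (wedge_list ys) (wedge_list zs) (\<lambda>z. 0) = (\<lambda>z. 0)"
      by (auto simp: \<Phi>_def fun_eq_iff owedge_zeroR_fun)
  next
    fix c a u show "\<Phi> fp (wedge_list xs) (wedge_list ys) (wedge_list zs) (\<lambda>z. c * a z + u z)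
      = (\<lambda>z. c * \<Phi> fp (wedge_list xs) (wedge_list ys) (wedge_list zs) a z + \<Phi> fp (wedge_list xs) (wedge_list ys) (wedge_list zs) u z)"
      by (simp only: \<Phi>_def owedge_linL_fun owedge_linR_fun) (auto simp: fun_eq_iff algebra_simps)
  qed
  have L2: "\<Phi> fp (wedge_list xs) (wedge_list ys) om' eta' \<in> ?T"
    if "?Rc fp" "?cA \<le> p" "?cB \<le> q" "length xs = p - ?cA"
       "set ys \<subseteq> dualsub h (perp h (fixsp A))" "length ys = ?cA"
       "om' \<in> extpow (dualsub h (fixsp B)) (q - ?cB)"
       "eta' \<in> extpow (dualsub h (perp h (fixsp B))) ?cB"
     for fp xs ys om' eta'
  proof (rule fspan_lin_cs[where \<Psi> = "\<lambda>om'. \<Phi> fp (wedge_list xs) (wedge_list ys) om' eta'"])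
    show "om' \<in> fspan {wedge_list xis |xis. set xis \<subseteq> dualsub h (fixsp B) \<and> length xis = q - ?cB}"
      using that(7) by (simp add: extpow_def)
  next
    fix a assume "a \<in> {wedge_list xis |xis. set xis \<subseteq> dualsub h (fixsp B) \<and> length xis = q - ?cB}"
    then obtain zs where "a = wedge_list zs" "length zs = q - ?cB" by blast
    then show "\<Phi> fp (wedge_list xs) (wedge_list ys) a eta' \<in> ?T"
      using L1 that by simp
  next
    show "\<Phi> fp (wedge_list xs) (wedge_list ys) (\<lambda>z. 0) eta' = (\<lambda>z. 0)"
      by (auto simp: \<Phi>_def fun_eq_iff owedge_zeroL_fun owedge_zeroR_fun)
  next
    fix c a u show "\<Phi> fp (wedge_list xs) (wedge_list ys) (\<lambda>z. c * a z + u z) eta'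
      = (\<lambda>z. c * \<Phi> fp (wedge_list xs) (wedge_list ys) a eta' z + \<Phi> fp (wedge_list xs) (wedge_list ys) u eta' z)"
      by (simp only: \<Phi>_def owedge_linL_fun owedge_linR_fun) (auto simp: fun_eq_iff algebra_simps)
  qed
  have L3: "\<Phi> fp (wedge_list xs) eta om' eta' \<in> ?T"
    if "?Rc fp" "?cA \<le> p" "?cB \<le> q" "length xs = p - ?cA"
       "eta \<in> extpow (dualsub h (perp h (fixsp A))) ?cA"
       "om' \<in> extpow (dualsub h (fixsp B)) (q - ?cB)"
       "eta' \<in> extpow (dualsub h (perp h (fixsp B))) ?cB"
     for fp xs eta om' eta'
  proof (rule fspan_lin_cs[where \<Psi> = "\<lambda>eta. \<Phi> fp (wedge_list xs) eta om' eta'"])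
    show "eta \<in> fspan {wedge_list xis |xis. set xis \<subseteq> dualsub h (perp h (fixsp A)) \<and> length xis = ?cA}"
      using that(5) by (simp add: extpow_def)
  next
    fix a assume "a \<in> {wedge_list xis |xis. set xis \<subseteq> dualsub h (perp h (fixsp A)) \<and> length xis = ?cA}"
    then obtain ys where "a = wedge_list ys" "set ys \<subseteq> dualsub h (perp h (fixsp A))" "length ys = ?cA" by blast
    then show "\<Phi> fp (wedge_list xs) a om' eta' \<in> ?T"
      using L2 that by simp
  next
    show "\<Phi> fp (wedge_list xs) (\<lambda>z. 0) om' eta' = (\<lambda>z. 0)"
      by (auto simp: \<Phi>_def fun_eq_iff owedge_zeroL_fun owedge_zeroR_fun)
  next
    fix c a u show "\<Phi> fp (wedge_list xs) (\<lambda>z. c * a z + u z) om' eta'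
      = (\<lambda>z. c * \<Phi> fp (wedge_list xs) a om' eta' z + \<Phi> fp (wedge_list xs) u om' eta' z)"
      by (simp only: \<Phi>_def owedge_linL_fun owedge_linR_fun) (auto simp: fun_eq_iff algebra_simps)
  qed
  have L4: "\<Phi> fp om eta om' eta' \<in> ?T"
    if "?Rc fp" "?cA \<le> p" "?cB \<le> q"
       "om \<in> extpow (dualsub h (fixsp A)) (p - ?cA)"
       "eta \<in> extpow (dualsub h (perp h (fixsp A))) ?cA"
       "om' \<in> extpow (dualsub h (fixsp B)) (q - ?cB)"
       "eta' \<in> extpow (dualsub h (perp h (fixsp B))) ?cB"
     for fp om eta om' eta'
  proof (rule fspan_lin_cs[where \<Psi> = "\<lambda>om. \<Phi> fp om eta om' eta'"])
    show "om \<in> fspan {wedge_list xis |xis. set xis \<subseteq> dualsub h (fixsp A) \<and> length xis = p - ?cA}"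
      using that(4) by (simp add: extpow_def)
  next
    fix a assume "a \<in> {wedge_list xis |xis. set xis \<subseteq> dualsub h (fixsp A) \<and> length xis = p - ?cA}"
    then obtain xs where "a = wedge_list xs" "length xs = p - ?cA" by blast
    then show "\<Phi> fp a eta om' eta' \<in> ?T"
      using L3 that by simp
  next
    show "\<Phi> fp (\<lambda>z. 0) eta om' eta' = (\<lambda>z. 0)"
      by (auto simp: \<Phi>_def fun_eq_iff owedge_zeroL_fun)
  next
    fix c a u show "\<Phi> fp (\<lambda>z. c * a z + u z) eta om' eta'
      = (\<lambda>z. c * \<Phi> fp a eta om' eta' z + \<Phi> fp u eta om' eta' z)"
      by (simp only: \<Phi>_def owedge_linL_fun owedge_linR_fun) (auto simp: fun_eq_iff algebra_simps)
  qed
  let ?G1 = "{(\<lambda>(xi, vs). f xi * owedge om eta vs) | f om eta.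
      ?cA \<le> p \<and> f \<in> R1 \<and> om \<in> extpow (dualsub h (fixsp A)) (p - ?cA) \<and>
      eta \<in> extpow (dualsub h (perp h (fixsp A))) ?cA}"
  let ?G2 = "{(\<lambda>(xi, vs). f xi * owedge om eta vs) | f om eta.
      ?cB \<le> q \<and> f \<in> R2 \<and> om \<in> extpow (dualsub h (fixsp B)) (q - ?cB) \<and>
      eta \<in> extpow (dualsub h (perp h (fixsp B))) ?cB}"
  have inner: "twedge a (actm A A' F') \<in> ?T" if a: "a \<in> ?G1" for a
  proof -
    obtain f om eta where a': "a = (\<lambda>(xi, vs). f xi * owedge om eta vs)" "?cA \<le> p" "f \<in> R1"
      "om \<in> extpow (dualsub h (fixsp A)) (p - ?cA)" "eta \<in> extpow (dualsub h (perp h (fixsp A))) ?cA"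
      using a by blast
    show ?thesis
    proof (rule fspan_lin_cs[where \<Psi> = "\<lambda>F'. twedge a (actm A A' F')"])
      show "F' \<in> fspan ?G2" using F' by (simp add: comp_space_def)
    next
      fix b assume "b \<in> ?G2"
      then obtain f' om' eta' where b': "b = (\<lambda>(xi, vs). f' xi * owedge om' eta' vs)" "?cB \<le> q" "f' \<in> R2"
        "om' \<in> extpow (dualsub h (fixsp B)) (q - ?cB)" "eta' \<in> extpow (dualsub h (perp h (fixsp B))) ?cB"
        by blast
      have "twedge a (actm A A' b) = \<Phi> (\<lambda>xi. f xi * f' (xi v* A)) om eta om' eta'"
        unfolding a'(1) b'(1) tw_gen \<Phi>_def ..
      moreover have "?Rc (\<lambda>xi. f xi * f' (xi v* A))" using Rc a'(3) b'(3) by blast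
      ultimately show "twedge a (actm A A' b) \<in> ?T" using L4 a' b' by simp
    next
      show "twedge a (actm A A' (\<lambda>z. 0)) = (\<lambda>z. 0)" by (simp add: actm_zero twedge_zeroR)
    next
      fix c a' u show "twedge a (actm A A' (\<lambda>z. c * a' z + u z))
        = (\<lambda>z. c * twedge a (actm A A' a') z + twedge a (actm A A' u) z)"
        by (simp add: actm_lin twedge_linR)
    qed
  qed
  show ?thesis
  proof (rule fspan_lin_cs[where \<Psi> = "\<lambda>F. twedge F (actm A A' F')"])
    show "F \<in> fspan ?G1" using F by (simp add: comp_space_def)
  next
    fix a assume "a \<in> ?G1" then show "twedge a (actm A A' F') \<in> ?T" by (rule inner)
  next
    show "twedge (\<lambda>z. 0) (actm A A' F') = (\<lambda>z. 0)" by (rule twedge_zeroL)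
  next
    fix c a u show "twedge (\<lambda>z. c * a z + u z) (actm A A' F') = (\<lambda>z. c * twedge a (actm A A' F') z + twedge u (actm A A' F') z)"
      by (rule twedge_linL)
  qed
qed

lemma len_nths_compl: "length (nths vs S) + length (nths vs (- S)) = length vs"
proof -
  let ?A = "{i. i < length vs \<and> i \<in> S}" and ?B = "{i. i < length vs \<and> i \<in> - S}"
  have "?A \<union> ?B = {..<length vs}" by auto
  moreover have "?A \<inter> ?B = {}" by auto
  moreover have "finite ?A" "finite ?B" by auto
  ultimately have "card ?A + card ?B = length vs" by (metis card_Un_disjoint card_lessThan)
  then show ?thesis by (simp add: length_nths)
qed

lemma sum_delta_split:
  fixes X Y :: complex and a b m r :: nat
  assumes "a + b = m"
  shows "(\<Sum>p\<in>{..r}. (if a = p then X else 0) * (if b = r - p then Y else 0)) = (if m = r then X * Y else 0)"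
proof -
  have "(\<Sum>p\<in>{..r}. (if a = p then X else 0) * (if b = r - p then Y else 0))
      = (\<Sum>p\<in>{..r}. if p = a then (if b = r - p then X * Y else 0) else 0)"
    by (rule sum.cong) auto
  also have "\<dots> = (if a \<in> {..r} then (if b = r - a then X * Y else 0) else 0)"
    by (subst sum.delta) auto
  also have "\<dots> = (if m = r then X * Y else 0)" using assms by auto
  finally show ?thesis .
qed

lemma owedge_hc_sum:
  "(\<Sum>p\<in>{..r}. owedge (\<lambda>ws. if length ws = p then w1 ws else 0) (\<lambda>ws. if length ws = r - p then w2 ws else 0) vs)
   = (if length vs = r then owedge w1 w2 vs else 0)"
proof -
  let ?sg = "\<lambda>S. shuffle_sign (length vs) S"
  have "(\<Sum>p\<in>{..r}. owedge (\<lambda>ws. if length ws = p then w1 ws else 0) (\<lambda>ws. if length ws = r - p then w2 ws else 0) vs)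
      = (\<Sum>S\<in>Pow {..<length vs}. \<Sum>p\<in>{..r}. ?sg S * ((if length (nths vs S) = p then w1 (nths vs S) else 0)
            * (if length (nths vs (- S)) = r - p then w2 (nths vs (- S)) else 0)))"
    unfolding owedge_def by (subst sum.swap) (simp add: mult.assoc)
  also have "\<dots> = (\<Sum>S\<in>Pow {..<length vs}. ?sg S * (if length vs = r then w1 (nths vs S) * w2 (nths vs (- S)) else 0))"
    by (rule sum.cong[OF refl], subst sum_distrib_left[symmetric], subst sum_delta_split[OF len_nths_compl]) simp
  also have "\<dots> = (if length vs = r then owedge w1 w2 vs else 0)"
    by (simp add: owedge_def mult.assoc)
  finally show ?thesis .
qed

lemma hcomp_twedge:
  "hcomp r (twedge F1 F2) = (\<lambda>z. \<Sum>p\<in>{..r}. twedge (hcomp p F1) (hcomp (r - p) F2) z)"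
proof (rule ext, clarify)
  fix xi vs
  have "(\<Sum>p\<in>{..r}. twedge (hcomp p F1) (hcomp (r - p) F2) (xi, vs))
     = (\<Sum>p\<in>{..r}. owedge (\<lambda>ws. if length ws = p then F1 (xi, ws) else 0)
          (\<lambda>ws. if length ws = r - p then F2 (xi, ws) else 0) vs)"
    by (simp add: twedge_def hcomp_def)
  also have "\<dots> = (if length vs = r then owedge (\<lambda>ws. F1 (xi, ws)) (\<lambda>ws. F2 (xi, ws)) vs else 0)"
    by (rule owedge_hc_sum)
  finally show "hcomp r (twedge F1 F2) (xi, vs) = (\<Sum>p\<in>{..r}. twedge (hcomp p F1) (hcomp (r - p) F2) (xi, vs))"
    by (simp add: hcomp_def twedge_def)
qed

lemma hcomp_sum: "hcomp r (\<lambda>z. \<Sum>g\<in>I. T g z) = (\<lambda>z. \<Sum>g\<in>I. hcomp r (T g) z)"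
  by (auto simp: hcomp_def fun_eq_iff)

lemma hcomp_actm: "hcomp q (actm A A' F) = actm A A' (hcomp q F)"
  by (auto simp: hcomp_def actm_def fun_eq_iff)

lemma act_actm: "act G rho g F = actm (rho g) (rho (inv\<^bsub>G\<^esub> g)) F"
  by (simp add: act_def actm_def)

lemma comp_space_sum: "finite I \<Longrightarrow> (\<And>i. i \<in> I \<Longrightarrow> f i \<in> comp_space R h M p) \<Longrightarrow>
   (\<lambda>x. \<Sum>i\<in>I. f i x) \<in> comp_space R h M p"
  unfolding comp_space_def by (rule fspan_sum)

lemma comp_space_mono: "R \<subseteq> R' \<Longrightarrow> comp_space R h M p \<subseteq> comp_space R' h M p"
  unfolding comp_space_def by (rule fspan_mono) blast

lemma smash_hcomp:
  fixes G :: "('g, 'b) monoid_scheme" and rho :: "'g \<Rightarrow> complex^'n^'n"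
    and h :: "complex^'n \<Rightarrow> complex^'n \<Rightarrow> complex"
  assumes grp: "group G" and fin: "finite (carrier G)"
    and hom: "\<forall>g\<in>carrier G. \<forall>k\<in>carrier G. rho (g \<otimes>\<^bsub>G\<^esub> k) = rho g ** rho k"
    and Hyp: "\<And>g k p q. g \<in> carrier G \<Longrightarrow> k \<in> carrier G \<Longrightarrow>
       twedge (hcomp p (\<alpha> g)) (actm (rho g) (rho (inv\<^bsub>G\<^esub> g)) (hcomp q (\<beta> k)))
         \<in> comp_space (Rf (rho g ** rho k)) h (rho g ** rho k) (p + q)"
    and k: "k \<in> carrier G"
  shows "hcomp r (smash G rho \<alpha> \<beta> k) \<in> comp_space (Rf (rho k)) h (rho k) r"
proof -
  interpret G: group G by (rule grp)
  have "smash G rho \<alpha> \<beta> k = (\<lambda>z. \<Sum>g\<in>carrier G. twedge (\<alpha> g) (act G rho g (\<beta> (inv\<^bsub>G\<^esub> g \<otimes>\<^bsub>G\<^esub> k))) z)"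
    using k by (simp add: smash_def)
  then have e: "hcomp r (smash G rho \<alpha> \<beta> k) = (\<lambda>z. \<Sum>g\<in>carrier G. \<Sum>p\<in>{..r}.
      twedge (hcomp p (\<alpha> g)) (actm (rho g) (rho (inv\<^bsub>G\<^esub> g)) (hcomp (r - p) (\<beta> (inv\<^bsub>G\<^esub> g \<otimes>\<^bsub>G\<^esub> k)))) z)"
    by (simp add: hcomp_sum hcomp_twedge act_actm hcomp_actm)
  show ?thesis unfolding e
  proof (rule comp_space_sum[OF fin], rule comp_space_sum[OF finite_atMost])
    fix g p assume g: "g \<in> carrier G" and p: "p \<in> {..r}"
    have k': "inv\<^bsub>G\<^esub> g \<otimes>\<^bsub>G\<^esub> k \<in> carrier G" using g k by simp
    have "g \<otimes>\<^bsub>G\<^esub> (inv\<^bsub>G\<^esub> g \<otimes>\<^bsub>G\<^esub> k) = k" using g k by (simp add: G.m_assoc[symmetric])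
    then have m: "rho g ** rho (inv\<^bsub>G\<^esub> g \<otimes>\<^bsub>G\<^esub> k) = rho k" using hom g k' by metis
    have pr: "p + (r - p) = r" using p by simp
    show "twedge (hcomp p (\<alpha> g)) (actm (rho g) (rho (inv\<^bsub>G\<^esub> g)) (hcomp (r - p) (\<beta> (inv\<^bsub>G\<^esub> g \<otimes>\<^bsub>G\<^esub> k))))
        \<in> comp_space (Rf (rho k)) h (rho k) r"
      using Hyp[OF g k', of p "r - p"] unfolding m pr .
  qed
qed

theorem proposition6p1:
  fixes G :: "('g, 'b) monoid_scheme"
    and rho :: "'g \<Rightarrow> complex^'n^'n"
    and h :: "complex^'n \<Rightarrow> complex^'n \<Rightarrow> complex"
  assumes "group G" and "finite (carrier G)"
    and "\<forall>g\<in>carrier G. \<forall>k\<in>carrier G. rho (g \<otimes>\<^bsub>G\<^esub> k) = rho g ** rho k"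
    and "rho \<one>\<^bsub>G\<^esub> = mat 1"
    and "hermitian_inner h"
    and "\<forall>g\<in>carrier G. \<forall>v w. h (rho g *v v) (rho g *v w) = h v w"
  shows "(\<forall>alpha\<in>Zsp G rho h. \<forall>beta\<in>Zsp G rho h. smash G rho alpha beta \<in> Zsp G rho h) \<and>
         Bsp G rho h \<subseteq> Zsp G rho h \<and>
         (\<forall>alpha\<in>Zsp G rho h. \<forall>beta\<in>Bsp G rho h.
             smash G rho alpha beta \<in> Bsp G rho h \<and> smash G rho beta alpha \<in> Bsp G rho h)"
proof -
  note grp = assms(1) and fin = assms(2) and hom = assms(3) and one = assms(4) and H = assms(5) and unit = assms(6)
  interpret G: group G by (rule grp)
  have inv: "rho (inv\<^bsub>G\<^esub> g) ** rho g = mat 1" if "g \<in> carrier G" for g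
    using hom that one by (metis G.inv_closed G.l_inv)
  have un: "\<forall>v w. h (rho g *v v) (rho g *v w) = h v w" if "g \<in> carrier G" for g
    using unit that by blast
  have prod: "twedge (hcomp p (\<alpha> g)) (actm (rho g) (rho (inv\<^bsub>G\<^esub> g)) (hcomp q (\<beta> k)))
       \<in> comp_space R3 h (rho g ** rho k) (p + q)"
    if g: "g \<in> carrier G" and k: "k \<in> carrier G"
      and a: "hcomp p (\<alpha> g) \<in> comp_space R1 h (rho g) p"
      and b: "hcomp q (\<beta> k) \<in> comp_space R2 h (rho k) q"
      and Rc: "perp h (fixsp (rho g)) \<subseteq> perp h (fixsp (rho g ** rho k)) \<Longrightarrow>
             (\<lambda>v. rho g *v v) ` perp h (fixsp (rho k)) \<subseteq> perp h (fixsp (rho g ** rho k)) \<Longrightarrow>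
             \<forall>f\<in>R1. \<forall>f'\<in>R2. (\<lambda>xi. f xi * f' (xi v* rho g)) \<in> R3"
    for g k p q \<alpha> \<beta> R1 R2 R3
    by (rule comp_prod[OF H un[OF g] un[OF k] inv[OF g] Rc a b])
  have RZ: "\<forall>f\<in>polyfun. \<forall>f'\<in>polyfun. (\<lambda>xi. f xi * f' (xi v* M)) \<in> polyfun" for M :: "complex^'n^'n"
    using polyfun.polyfun_mult polyfun_act by blast
  have RB1: "\<forall>f\<in>polyfun. \<forall>f'\<in>ideal_gen (perp h (fixsp B)). (\<lambda>xi. f xi * f' (xi v* A)) \<in> ideal_gen (perp h (fixsp C))"
    if "(\<lambda>v. A *v v) ` perp h (fixsp B) \<subseteq> perp h (fixsp C)" for A B C :: "complex^'n^'n"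
  proof (intro ballI)
    fix f f' :: "complex^'n \<Rightarrow> complex" assume f: "f \<in> polyfun" and f': "f' \<in> ideal_gen (perp h (fixsp B))"
    have "(\<lambda>xi. f' (xi v* A)) \<in> ideal_gen ((\<lambda>v. A *v v) ` perp h (fixsp B))" by (rule ideal_act[OF f'])
    then have "(\<lambda>xi. f' (xi v* A)) \<in> ideal_gen (perp h (fixsp C))" using ideal_mono[OF that] by blast
    then have "(\<lambda>xi. f' (xi v* A) * f xi) \<in> ideal_gen (perp h (fixsp C))"
      using ideal_mult[of "\<lambda>xi. f' (xi v* A)" "perp h (fixsp C)" f] f by simp
    then show "(\<lambda>xi. f xi * f' (xi v* A)) \<in> ideal_gen (perp h (fixsp C))"
      by (simp add: mult.commute)
  qed
  have RB2: "\<forall>f\<in>ideal_gen (perp h (fixsp A)). \<forall>f'\<in>polyfun. (\<lambda>xi. f xi * f' (xi v* A)) \<in> ideal_gen (perp h (fixsp C))"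
    if "perp h (fixsp A) \<subseteq> perp h (fixsp C)" for A C :: "complex^'n^'n"
  proof (intro ballI)
    fix f f' :: "complex^'n \<Rightarrow> complex" assume f: "f \<in> ideal_gen (perp h (fixsp A))" and f': "f' \<in> polyfun"
    have "f \<in> ideal_gen (perp h (fixsp C))" using ideal_mono[OF that] f by blast
    from ideal_mult[OF this polyfun_act[OF f']] show "(\<lambda>xi. f xi * f' (xi v* A)) \<in> ideal_gen (perp h (fixsp C))" .
  qed
  have BZ: "Bsp G rho h \<subseteq> Zsp G rho h"
  proof
    fix \<beta> assume b: "\<beta> \<in> Bsp G rho h"
    have "comp_space (ideal_gen (perp h (fixsp (rho g)))) h (rho g) p \<subseteq> comp_space polyfun h (rho g) p" for g p
      by (rule comp_space_mono) (use ideal_sub_polyfun in blast)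
    then show "\<beta> \<in> Zsp G rho h" using b unfolding Bsp_def Zsp_def by blast
  qed
  have smash0: "smash G rho \<alpha> \<beta> g = (\<lambda>_. 0)" if "g \<notin> carrier G" for \<alpha> \<beta> g
    using that by (simp add: smash_def)
  have ZZ: "smash G rho \<alpha> \<beta> \<in> Zsp G rho h" if a: "\<alpha> \<in> Zsp G rho h" and b: "\<beta> \<in> Zsp G rho h" for \<alpha> \<beta>
  proof -
    have "hcomp r (smash G rho \<alpha> \<beta> k) \<in> comp_space ((\<lambda>M. polyfun) (rho k)) h (rho k) r"
      if k: "k \<in> carrier G" for k r
    proof (rule smash_hcomp[OF grp fin hom _ k])
      fix g k p q assume g: "g \<in> carrier G" and k: "k \<in> carrier G"
      show "twedge (hcomp p (\<alpha> g)) (actm (rho g) (rho (inv\<^bsub>G\<^esub> g)) (hcomp q (\<beta> k)))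
         \<in> comp_space ((\<lambda>M. polyfun) (rho g ** rho k)) h (rho g ** rho k) (p + q)"
        by (rule prod[OF g k]) (use a b g k RZ in \<open>auto simp: Zsp_def\<close>)
    qed
    then show ?thesis using smash0 by (simp add: Zsp_def)
  qed
  have ZB: "smash G rho \<alpha> \<beta> \<in> Bsp G rho h" if a: "\<alpha> \<in> Zsp G rho h" and b: "\<beta> \<in> Bsp G rho h" for \<alpha> \<beta>
  proof -
    have "hcomp r (smash G rho \<alpha> \<beta> k) \<in> comp_space ((\<lambda>M. ideal_gen (perp h (fixsp M))) (rho k)) h (rho k) r"
      if k: "k \<in> carrier G" for k r
    proof (rule smash_hcomp[OF grp fin hom _ k])
      fix g k p q assume g: "g \<in> carrier G" and k: "k \<in> carrier G"
      show "twedge (hcomp p (\<alpha> g)) (actm (rho g) (rho (inv\<^bsub>G\<^esub> g)) (hcomp q (\<beta> k)))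
         \<in> comp_space ((\<lambda>M. ideal_gen (perp h (fixsp M))) (rho g ** rho k)) h (rho g ** rho k) (p + q)"
        by (rule prod[OF g k]) (use a b g k RB1 in \<open>auto simp: Zsp_def Bsp_def\<close>)
    qed
    then show ?thesis using smash0 by (simp add: Bsp_def)
  qed
  have BZ': "smash G rho \<beta> \<alpha> \<in> Bsp G rho h" if a: "\<alpha> \<in> Zsp G rho h" and b: "\<beta> \<in> Bsp G rho h" for \<alpha> \<beta>
  proof -
    have "hcomp r (smash G rho \<beta> \<alpha> k) \<in> comp_space ((\<lambda>M. ideal_gen (perp h (fixsp M))) (rho k)) h (rho k) r"
      if k: "k \<in> carrier G" for k r
    proof (rule smash_hcomp[OF grp fin hom _ k])
      fix g k p q assume g: "g \<in> carrier G" and k: "k \<in> carrier G"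
      show "twedge (hcomp p (\<beta> g)) (actm (rho g) (rho (inv\<^bsub>G\<^esub> g)) (hcomp q (\<alpha> k)))
         \<in> comp_space ((\<lambda>M. ideal_gen (perp h (fixsp M))) (rho g ** rho k)) h (rho g ** rho k) (p + q)"
        by (rule prod[OF g k]) (use a b g k RB2 in \<open>auto simp: Zsp_def Bsp_def\<close>)
    qed
    then show ?thesis using smash0 by (simp add: Bsp_def)
  qed
  show ?thesis using ZZ BZ ZB BZ' by blast
qed

end
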